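(* Let $\mathcal{H}_A,\mathcal{H}_B,\mathcal{H}_C$ be finite-dimensional complex Hilbert spaces and let $|\psi\rangle\in\mathcal{H}_A\otimes\mathcal{H}_B\otimes\mathcal{H}_C$ be a unit vector, with $\rho=|\psi\rangle\langle\psi|$. Let $d_A$ be the rank of the reduced state $\rho_A=\mathrm{Tr}_{BC}\,\rho$, and assume $d_A\ge 2$. Then $$\sqrt{\tfrac{2}{d_A(d_A-1)}}\; N_{A:CB}\;\le\; N_{AC:B}+N_{AB:C},$$ where $N_{A:CB}$, $N_{AC:B}$, $N_{AB:C}$ denote the negativities of $\rho$ with respect to the bipartitions $A|BC$, $AC|B$ and $AB|C$ respectively.
   Context: For a bipartite state $\rho_{XY}$ on $\mathcal{H}_X\otimes\mathcal{H}_Y$, the negativity is $N_{X:Y}=\frac{\|\rho_{XY}^{T_X}\|_1-1}{2}$, where $\rho_{XY}^{T_X}$ is the partial transpose with respect to subsystem $X$ (in any fixed basis) and $\|\sigma\|_1=\mathrm{Tr}\sqrt{\sigma^\dagger\sigma}$ is the trace norm. For a tripartite state, $N_{AC:B}$ means the negativity for the bipartition with $X=AC$ and $Y=B$, and similarly for the others. *)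

theory Defs
  imports "Jordan_Normal_Form.Matrix" "Jordan_Normal_Form.DL_Rank"
begin

definition dagger :: "complex mat \<Rightarrow> complex mat" where
  "dagger A = mat (dim_col A) (dim_row A) (\<lambda>(i,j). cnj (A $$ (j,i)))"

definition psd :: "nat \<Rightarrow> complex mat \<Rightarrow> bool" where
  "psd n S \<longleftrightarrow> S \<in> carrier_mat n n \<and>
     (\<forall>v \<in> carrier_vec n. Im (conjugate v \<bullet> (S *\<^sub>v v)) = 0 \<and> Re (conjugate v \<bullet> (S *\<^sub>v v)) \<ge> 0)"

definition mat_sqrt :: "nat \<Rightarrow> complex mat \<Rightarrow> complex mat" where
  "mat_sqrt n P = (THE S. psd n S \<and> S * S = P)"

definition trace_norm :: "complex mat \<Rightarrow> real" where
  "trace_norm A = (let S = mat_sqrt (dim_col A) (dagger A * A) in Re (\<Sum>i < dim_row S. S $$ (i,i)))"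

text \<open>Tripartite system H_A (x) H_B (x) H_C with dims nA, nB, nC; the basis vector
  |i>|j>|k> has index i*nB*nC + j*nC + k.\<close>
definition idx3 :: "nat \<Rightarrow> nat \<Rightarrow> nat \<Rightarrow> nat \<Rightarrow> nat \<Rightarrow> nat" where
  "idx3 nB nC i j k = i * (nB * nC) + j * nC + k"

definition dec3 :: "nat \<Rightarrow> nat \<Rightarrow> nat \<Rightarrow> nat \<times> nat \<times> nat" where
  "dec3 nB nC x = (x div (nB * nC), (x div nC) mod nB, x mod nC)"

definition proj :: "complex vec \<Rightarrow> complex mat" where
  "proj \<psi> = mat (dim_vec \<psi>) (dim_vec \<psi>) (\<lambda>(x,y). \<psi> $ x * cnj (\<psi> $ y))"

definition reduced_A :: "nat \<Rightarrow> nat \<Rightarrow> nat \<Rightarrow> complex mat \<Rightarrow> complex mat" where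
  "reduced_A nA nB nC \<rho> = mat nA nA (\<lambda>(i,i').
      \<Sum>j<nB. \<Sum>k<nC. \<rho> $$ (idx3 nB nC i j k, idx3 nB nC i' j k))"

definition ptrans3 :: "nat \<Rightarrow> nat \<Rightarrow> nat \<Rightarrow> bool \<Rightarrow> bool \<Rightarrow> bool \<Rightarrow> complex mat \<Rightarrow> complex mat" where
  "ptrans3 nA nB nC tA tB tC \<rho> = mat (nA*nB*nC) (nA*nB*nC) (\<lambda>(x,y).
     (case dec3 nB nC x of (i,j,k) \<Rightarrow> case dec3 nB nC y of (i',j',k') \<Rightarrow>
       \<rho> $$ (idx3 nB nC (if tA then i' else i) (if tB then j' else j) (if tC then k' else k),
             idx3 nB nC (if tA then i else i') (if tB then j else j') (if tC then k else k'))))"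

text \<open>Negativity of the bipartition X:Y where X is the set of flagged subsystems.\<close>
definition negativity3 :: "nat \<Rightarrow> nat \<Rightarrow> nat \<Rightarrow> bool \<Rightarrow> bool \<Rightarrow> bool \<Rightarrow> complex mat \<Rightarrow> real" where
  "negativity3 nA nB nC tA tB tC \<rho> = (trace_norm (ptrans3 nA nB nC tA tB tC \<rho>) - 1) / 2"

end

theory Submission
  imports Defs "Jordan_Normal_Form.Schur_Decomposition"
begin


definition qf :: "nat \<Rightarrow> complex mat \<Rightarrow> (nat \<Rightarrow> complex) \<Rightarrow> complex" where
  "qf n S f = (\<Sum>a<n. \<Sum>b<n. cnj (f a) * S$$(a,b) * f b)"

lemma qf_eq: assumes "S \<in> carrier_mat n n"
  shows "conjugate (vec n f) \<bullet> (S *\<^sub>v vec n f) = qf n S f"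
  using assms unfolding qf_def scalar_prod_def
  by (auto simp: mult_mat_vec_def scalar_prod_def sum_distrib_left lessThan_atLeast0 intro!: sum.cong)

lemma psdD: assumes "psd n S" shows "Im (qf n S f) = 0" "Re (qf n S f) \<ge> 0" "S \<in> carrier_mat n n"
  using assms qf_eq[of S n f] unfolding psd_def by (metis vec_carrier)+

lemma qf_support2:
  assumes "i < n" "j < n" "i \<noteq> j" "\<And>a. a \<noteq> i \<Longrightarrow> a \<noteq> j \<Longrightarrow> f a = 0"
  shows "qf n S f = cnj (f i) * S$$(i,i) * f i + cnj (f i) * S$$(i,j) * f j
                  + cnj (f j) * S$$(j,i) * f i + cnj (f j) * S$$(j,j) * f j"
proof -
  have A: "\<And>g. (\<Sum>b<n. g b * f b) = g i * f i + g j * f j"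
  proof -
    fix g :: "nat \<Rightarrow> complex"
    have "(\<Sum>b<n. g b * f b) = (\<Sum>b\<in>{i,j}. g b * f b)"
      by (rule sum.mono_neutral_right, insert assms, auto)
    thus "(\<Sum>b<n. g b * f b) = g i * f i + g j * f j" using assms by simp
  qed
  have "qf n S f = (\<Sum>a<n. (\<Sum>b<n. (cnj (f a) * S$$(a,b)) * f b))" unfolding qf_def by simp
  also have "\<dots> = (\<Sum>a<n. cnj (f a) * S$$(a,i) * f i + cnj (f a) * S$$(a,j) * f j)"
    by (subst A, simp)
  also have "\<dots> = (\<Sum>a<n. (S$$(a,i) * f i + S$$(a,j) * f j) * cnj (f a))"
    by (rule sum.cong, auto simp: algebra_simps)
  also have "\<dots> = (S$$(i,i) * f i + S$$(i,j) * f j) * cnj (f i) + (S$$(j,i) * f i + S$$(j,j) * f j) * cnj (f j)"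
  proof -
    have "(\<Sum>a<n. (S$$(a,i) * f i + S$$(a,j) * f j) * cnj (f a)) = (\<Sum>a\<in>{i,j}. (S$$(a,i) * f i + S$$(a,j) * f j) * cnj (f a))"
      by (rule sum.mono_neutral_right, insert assms, auto)
    thus ?thesis using assms by simp
  qed
  finally show ?thesis by (simp add: algebra_simps)
qed

lemma psd_herm: assumes "psd n S" "i < n" "j < n"
  shows "S$$(j,i) = cnj (S$$(i,j))"
proof (cases "i = j")
  case True
  have "qf n S (\<lambda>a. if a = i then 1 else 0) = S$$(i,i)"
  proof -
    have "qf n S (\<lambda>a. if a = i then 1 else 0) = (\<Sum>a<n. if a = i then S$$(i,i) else 0)"
      unfolding qf_def by (rule sum.cong, auto simp: if_distrib cong: if_cong)
    thus ?thesis using assms by simp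
  qed
  with psdD(1)[OF assms(1)] True show ?thesis by (simp add: complex_eq_iff)
next
  case False
  let ?f = "\<lambda>a. if a = i then 1 else if a = j then 1 else (0::complex)"
  let ?g = "\<lambda>a. if a = i then 1 else if a = j then \<i> else (0::complex)"
  let ?h = "\<lambda>a. if a = i then 1 else (0::complex)"
  let ?k = "\<lambda>a. if a = j then 1 else (0::complex)"
  have f: "qf n S ?f = S$$(i,i) + S$$(i,j) + S$$(j,i) + S$$(j,j)"
    using qf_support2[of i n j ?f S] assms False by auto
  have g: "qf n S ?g = S$$(i,i) + \<i> * S$$(i,j) - \<i> * S$$(j,i) + S$$(j,j)"
    using qf_support2[of i n j ?g S] assms False by (auto simp: algebra_simps)
  have h: "qf n S ?h = S$$(i,i)"
    using qf_support2[of i n j ?h S] assms False by auto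
  have k: "qf n S ?k = S$$(j,j)"
    using qf_support2[of i n j ?k S] assms False by auto
  from psdD(1)[OF assms(1), of ?f] psdD(1)[OF assms(1), of ?g] psdD(1)[OF assms(1), of ?h] psdD(1)[OF assms(1), of ?k]
  show ?thesis unfolding f g h k by (simp add: complex_eq_iff)
qed


definition app :: "nat \<Rightarrow> complex mat \<Rightarrow> (nat \<Rightarrow> complex) \<Rightarrow> nat \<Rightarrow> complex" where
  "app n S f a = (\<Sum>b<n. S$$(a,b) * f b)"

lemma qf_app: "qf n S f = (\<Sum>a<n. cnj (f a) * app n S f a)"
  unfolding qf_def app_def by (simp add: sum_distrib_left mult.assoc)

lemma app_mult: assumes "S \<in> carrier_mat n n" "T \<in> carrier_mat n n" "a < n"
  shows "app n (S * T) f a = app n S (app n T f) a"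
proof -
  have "app n (S * T) f a = (\<Sum>b<n. (\<Sum>c<n. S$$(a,c) * T$$(c,b)) * f b)"
    unfolding app_def using assms
    by (intro sum.cong refl, auto simp: scalar_prod_def lessThan_atLeast0)
  also have "\<dots> = (\<Sum>b<n. \<Sum>c<n. S$$(a,c) * T$$(c,b) * f b)" by (simp add: sum_distrib_right)
  also have "\<dots> = (\<Sum>c<n. \<Sum>b<n. S$$(a,c) * T$$(c,b) * f b)" by (rule sum.swap)
  also have "\<dots> = (\<Sum>c<n. S$$(a,c) * (\<Sum>b<n. T$$(c,b) * f b))" by (simp add: sum_distrib_left mult.assoc)
  finally show ?thesis unfolding app_def by simp
qed

lemma app_lin: "app n S (\<lambda>a. u a + (\<Sum>k\<in>K. c k * v k a)) x = app n S u x + (\<Sum>k\<in>K. c k * app n S (v k) x)"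
proof -
  have "(\<Sum>b<n. S$$(x,b) * (\<Sum>k\<in>K. c k * v k b)) = (\<Sum>b<n. \<Sum>k\<in>K. c k * (S$$(x,b) * v k b))"
    by (simp add: sum_distrib_left algebra_simps)
  also have "\<dots> = (\<Sum>k\<in>K. \<Sum>b<n. c k * (S$$(x,b) * v k b))" by (rule sum.swap)
  also have "\<dots> = (\<Sum>k\<in>K. c k * (\<Sum>b<n. S$$(x,b) * v k b))" by (simp add: sum_distrib_left)
  finally show ?thesis unfolding app_def by (simp add: distrib_left sum.distrib)
qed

lemma app_diff: "app n S (\<lambda>a. u a - v a) x = app n S u x - app n S v x"
  unfolding app_def by (simp add: algebra_simps sum_subtractf)

lemma app_scale: "app n S (\<lambda>a. c * u a) x = c * app n S u x"
  unfolding app_def by (simp add: sum_distrib_left algebra_simps)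

definition orthonormal :: "nat \<Rightarrow> 'k set \<Rightarrow> ('k \<Rightarrow> nat \<Rightarrow> complex) \<Rightarrow> bool" where
  "orthonormal n K w \<longleftrightarrow> (\<forall>k\<in>K. \<forall>l\<in>K. (\<Sum>a<n. cnj (w k a) * w l a) = (if k = l then 1 else 0))"

definition specmat :: "nat \<Rightarrow> 'k set \<Rightarrow> ('k \<Rightarrow> complex) \<Rightarrow> ('k \<Rightarrow> nat \<Rightarrow> complex) \<Rightarrow> complex mat" where
  "specmat n K c w = mat n n (\<lambda>(a,b). \<Sum>k\<in>K. c k * w k a * cnj (w k b))"

lemma specmat_carrier[simp]: "specmat n K c w \<in> carrier_mat n n"
  unfolding specmat_def by simp

lemma app_specmat: assumes "a < n"
  shows "app n (specmat n K c w) f a = (\<Sum>k\<in>K. c k * w k a * (\<Sum>b<n. cnj (w k b) * f b))"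
proof -
  have "app n (specmat n K c w) f a = (\<Sum>b<n. \<Sum>k\<in>K. c k * w k a * (cnj (w k b) * f b))"
    unfolding app_def specmat_def using assms by (intro sum.cong refl, simp add: sum_distrib_left sum_distrib_right algebra_simps)
  also have "\<dots> = (\<Sum>k\<in>K. \<Sum>b<n. c k * w k a * (cnj (w k b) * f b))" by (rule sum.swap)
  finally show ?thesis by (simp add: sum_distrib_left)
qed

lemma app_specmat_w: assumes "a < n" "orthonormal n K w" "l \<in> K" "finite K"
  shows "app n (specmat n K c w) (w l) a = c l * w l a"
proof -
  have "app n (specmat n K c w) (w l) a = (\<Sum>k\<in>K. c k * w k a * (if k = l then 1 else 0))"
    unfolding app_specmat[OF assms(1)] using assms(2,3) unfolding orthonormal_def by simp
  also have "\<dots> = c l * w l a" using assms(3,4) by (simp add: if_distrib cong: if_cong)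
  finally show ?thesis .
qed

lemma specmat_mult: assumes "orthonormal n K w" "finite K"
  shows "specmat n K c w * specmat n K d w = specmat n K (\<lambda>k. c k * d k) w"
proof (rule eq_matI)
  fix a b assume ab: "a < dim_row (specmat n K (\<lambda>k. c k * d k) w)" "b < dim_col (specmat n K (\<lambda>k. c k * d k) w)"
  hence a: "a < n" and b: "b < n" unfolding specmat_def by auto
  have "(specmat n K c w * specmat n K d w) $$ (a,b)
     = (\<Sum>e<n. (\<Sum>k\<in>K. c k * w k a * cnj (w k e)) * (\<Sum>l\<in>K. d l * w l e * cnj (w l b)))"
    using a b unfolding specmat_def by (simp add: scalar_prod_def lessThan_atLeast0)
  also have "\<dots> = (\<Sum>e<n. \<Sum>k\<in>K. \<Sum>l\<in>K. (c k * w k a * d l * cnj (w l b)) * (cnj (w k e) * w l e))"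
    by (simp only: sum_product) (simp add: algebra_simps)
  also have "\<dots> = (\<Sum>k\<in>K. \<Sum>e<n. \<Sum>l\<in>K. (c k * w k a * d l * cnj (w l b)) * (cnj (w k e) * w l e))"
    by (rule sum.swap)
  also have "\<dots> = (\<Sum>k\<in>K. \<Sum>l\<in>K. \<Sum>e<n. (c k * w k a * d l * cnj (w l b)) * (cnj (w k e) * w l e))"
    by (rule sum.cong[OF refl], rule sum.swap)
  also have "\<dots> = (\<Sum>k\<in>K. \<Sum>l\<in>K. c k * w k a * d l * cnj (w l b) * (\<Sum>e<n. cnj (w k e) * w l e))"
    by (simp add: sum_distrib_left)
  also have "\<dots> = (\<Sum>k\<in>K. \<Sum>l\<in>K. if k = l then c k * w k a * d l * cnj (w l b) else 0)"
    using assms(1) unfolding orthonormal_def by (intro sum.cong refl, auto)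
  also have "\<dots> = (\<Sum>k\<in>K. c k * d k * w k a * cnj (w k b))"
    using assms(2) by (simp add: algebra_simps)
  also have "\<dots> = specmat n K (\<lambda>k. c k * d k) w $$ (a,b)" unfolding specmat_def using a b by simp
  finally show "(specmat n K c w * specmat n K d w) $$ (a,b) = specmat n K (\<lambda>k. c k * d k) w $$ (a,b)" .
qed (auto simp: specmat_def)

lemma qf_specmat: "qf n (specmat n K c w) f = (\<Sum>k\<in>K. c k * cnj (\<Sum>a<n. cnj (w k a) * f a) * (\<Sum>a<n. cnj (w k a) * f a))"
proof -
  have "qf n (specmat n K c w) f = (\<Sum>a<n. cnj (f a) * (\<Sum>k\<in>K. c k * w k a * (\<Sum>b<n. cnj (w k b) * f b)))"
    unfolding qf_app by (intro sum.cong refl, simp add: app_specmat)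
  also have "\<dots> = (\<Sum>a<n. \<Sum>k\<in>K. (c k * (\<Sum>b<n. cnj (w k b) * f b)) * (cnj (f a) * w k a))"
    by (simp add: sum_distrib_left algebra_simps)
  also have "\<dots> = (\<Sum>k\<in>K. \<Sum>a<n. (c k * (\<Sum>b<n. cnj (w k b) * f b)) * (cnj (f a) * w k a))"
    by (rule sum.swap)
  also have "\<dots> = (\<Sum>k\<in>K. c k * (\<Sum>a<n. cnj (f a) * w k a) * (\<Sum>b<n. cnj (w k b) * f b))"
    by (simp add: sum_distrib_left algebra_simps)
  also have "\<dots> = (\<Sum>k\<in>K. c k * cnj (\<Sum>a<n. cnj (w k a) * f a) * (\<Sum>a<n. cnj (w k a) * f a))"
    by (simp add: mult.commute)
  finally show ?thesis .
qed

lemma psd_specmat: assumes "\<And>k. k \<in> K \<Longrightarrow> c k \<ge> 0"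
  shows "psd n (specmat n K (\<lambda>k. complex_of_real (c k)) w)"
  unfolding psd_def
proof (intro conjI ballI)
  fix v :: "complex vec" assume v: "v \<in> carrier_vec n"
  hence vv: "v = vec n (\<lambda>i. v $ i)" by auto
  let ?s = "\<lambda>k. (\<Sum>a<n. cnj (w k a) * v $ a)"
  have "conjugate v \<bullet> (specmat n K (\<lambda>k. complex_of_real (c k)) w *\<^sub>v v)
     = (\<Sum>k\<in>K. complex_of_real (c k * (cmod (?s k))\<^sup>2))"
  proof -
    have "conjugate v \<bullet> (specmat n K (\<lambda>k. complex_of_real (c k)) w *\<^sub>v v) = qf n (specmat n K (\<lambda>k. complex_of_real (c k)) w) (\<lambda>i. v $ i)"
      using qf_eq[of "specmat n K (\<lambda>k. complex_of_real (c k)) w" n "\<lambda>i. v $ i"] vv by simp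
    also have "\<dots> = (\<Sum>k\<in>K. complex_of_real (c k * (cmod (?s k))\<^sup>2))"
      unfolding qf_specmat
    proof (intro sum.cong refl)
      fix k
      have e: "complex_of_real ((cmod (?s k))\<^sup>2) = ?s k * cnj (?s k)" by (rule complex_norm_square)
      show "complex_of_real (c k) * cnj (?s k) * ?s k = complex_of_real (c k * (cmod (?s k))\<^sup>2)"
        by (subst of_real_mult, subst e) (simp add: ac_simps)
    qed
    finally show ?thesis .
  qed
  thus "Im (conjugate v \<bullet> (specmat n K (\<lambda>k. complex_of_real (c k)) w *\<^sub>v v)) = 0"
    "0 \<le> Re (conjugate v \<bullet> (specmat n K (\<lambda>k. complex_of_real (c k)) w *\<^sub>v v))"
    using assms by (auto intro!: sum_nonneg)
qed simp


lemma sum_cmod_sq_zero: fixes n :: nat assumes "(\<Sum>a<n. complex_of_real ((cmod (x a))\<^sup>2)) = 0" "a < n"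
  shows "x a = 0"
proof -
  have "(\<Sum>a<n. (cmod (x a))\<^sup>2) = 0" using assms(1)
    unfolding of_real_sum[symmetric] of_real_eq_0_iff .
  hence "\<forall>a\<in>lessThan n. (cmod (x a))\<^sup>2 = 0" using sum_nonneg_eq_0_iff[of "lessThan n" "\<lambda>a. (cmod (x a))\<^sup>2"] by simp
  thus ?thesis using assms(2) by auto
qed

lemma sqrt_unique:
  assumes fin: "finite K" and on: "orthonormal n K w" and lam: "\<And>k. k \<in> K \<Longrightarrow> lam k > 0"
    and S: "psd n S" and SS: "S * S = specmat n K (\<lambda>k. complex_of_real (lam k)) w"
  shows "S = specmat n K (\<lambda>k. complex_of_real (sqrt (lam k))) w"
proof -
  let ?Q = "specmat n K (\<lambda>k. complex_of_real (lam k)) w"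
  have Sc: "S \<in> carrier_mat n n" using psdD(3)[OF S] .
  have herm: "\<And>a b. a < n \<Longrightarrow> b < n \<Longrightarrow> cnj (S$$(a,b)) = S$$(b,a)"
    by (rule sym, rule psd_herm[OF S])
  have appSS: "\<And>f a. a < n \<Longrightarrow> app n S (app n S f) a = app n ?Q f a"
    using app_mult[OF Sc Sc] SS by simp
  have eig: "app n S (w k) a = complex_of_real (sqrt (lam k)) * w k a" if k: "k \<in> K" and a: "a < n" for k a
  proof -
    define t where "t = complex_of_real (sqrt (lam k))"
    have tt: "t * t = complex_of_real (lam k)" unfolding t_def using lam[OF k]
      by (simp flip: of_real_mult)
    define x where "x = (\<lambda>a. app n S (w k) a - t * w k a)"
    have Sx: "app n S x b = - t * x b" if b: "b < n" for b
    proof -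
      have "app n S x b = app n S (app n S (w k)) b - t * app n S (w k) b"
        unfolding x_def app_diff app_scale ..
      also have "\<dots> = complex_of_real (lam k) * w k b - t * app n S (w k) b"
        using appSS[OF b] app_specmat_w[OF b on k fin] by simp
      also have "\<dots> = - t * x b" unfolding x_def tt[symmetric] by (simp add: algebra_simps)
      finally show ?thesis .
    qed
    have "qf n S x = (\<Sum>b<n. cnj (x b) * (- t * x b))" unfolding qf_app by (intro sum.cong refl, simp add: Sx)
    also have "\<dots> = - t * (\<Sum>b<n. complex_of_real ((cmod (x b))\<^sup>2))"
      by (simp add: sum_distrib_left complex_norm_square algebra_simps del: of_real_power)
    finally have q: "qf n S x = - t * (\<Sum>b<n. complex_of_real ((cmod (x b))\<^sup>2))" .
    have "Re (qf n S x) \<ge> 0" using psdD(2)[OF S] .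
    hence h1: "sqrt (lam k) * (\<Sum>b<n. (cmod (x b))\<^sup>2) \<le> 0" unfolding q t_def
      by (simp add: of_real_sum[symmetric] del: of_real_sum)
    have h2: "sqrt (lam k) > 0" using lam[OF k] by simp
    have h3: "(\<Sum>b<n. (cmod (x b))\<^sup>2) \<ge> 0" by (intro sum_nonneg) auto
    from h1 h2 have "(\<Sum>b<n. (cmod (x b))\<^sup>2) \<le> 0" by (simp add: mult_le_0_iff)
    with h3 have h4: "(\<Sum>b<n. (cmod (x b))\<^sup>2) = 0" by simp
    have "(\<Sum>b<n. complex_of_real ((cmod (x b))\<^sup>2)) = 0" unfolding of_real_sum[symmetric] h4 by simp
    from sum_cmod_sq_zero[OF this a] show ?thesis unfolding x_def t_def by simp
  qed
  have zero: "app n S r a = 0" if orth: "\<And>l. l \<in> K \<Longrightarrow> (\<Sum>c<n. cnj (w l c) * r c) = 0" and a: "a < n" for r a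
  proof -
    have Qr: "app n ?Q r c = 0" if c: "c < n" for c
      unfolding app_specmat[OF c] by (simp add: orth)
    have "(\<Sum>b<n. complex_of_real ((cmod (app n S r b))\<^sup>2)) = (\<Sum>b<n. cnj (app n S r b) * app n S r b)"
      by (simp add: complex_norm_square mult.commute del: of_real_power)
    also have "\<dots> = (\<Sum>b<n. (\<Sum>c<n. S$$(c,b) * cnj (r c)) * app n S r b)"
      unfolding app_def by (intro sum.cong refl, simp add: herm)
    also have "\<dots> = (\<Sum>b<n. \<Sum>c<n. cnj (r c) * (S$$(c,b) * app n S r b))"
      by (simp add: sum_distrib_left sum_distrib_right algebra_simps)
    also have "\<dots> = (\<Sum>c<n. \<Sum>b<n. cnj (r c) * (S$$(c,b) * app n S r b))" by (rule sum.swap)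
    also have "\<dots> = (\<Sum>c<n. cnj (r c) * app n S (app n S r) c)"
      unfolding app_def[of n S "app n S r"] by (simp add: sum_distrib_left)
    also have "\<dots> = 0" by (intro sum.neutral ballI, simp add: appSS Qr)
    finally show ?thesis using sum_cmod_sq_zero[OF _ a] by blast
  qed
  show ?thesis
  proof (rule eq_matI)
    fix a b assume "a < dim_row (specmat n K (\<lambda>k. complex_of_real (sqrt (lam k))) w)"
      "b < dim_col (specmat n K (\<lambda>k. complex_of_real (sqrt (lam k))) w)"
    hence a: "a < n" and b: "b < n" by (auto simp: specmat_def)
    define e where "e = (\<lambda>c. if c = b then 1 else (0::complex))"
    define r where "r = (\<lambda>c. e c - (\<Sum>k\<in>K. cnj (w k b) * w k c))"
    have "S$$(a,b) = app n S e a" unfolding app_def e_def using b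
      by (simp add: if_distrib cong: if_cong)
    also have "e = (\<lambda>c. r c + (\<Sum>k\<in>K. cnj (w k b) * w k c))" unfolding r_def by simp
    also have "app n S \<dots> a = app n S r a + (\<Sum>k\<in>K. cnj (w k b) * app n S (w k) a)" by (rule app_lin)
    also have "app n S r a = 0"
    proof (rule zero[OF _ a])
      fix l assume l: "l \<in> K"
      have "(\<Sum>c<n. cnj (w l c) * r c) = (\<Sum>c<n. cnj (w l c) * e c) - (\<Sum>c<n. \<Sum>k\<in>K. cnj (w k b) * (cnj (w l c) * w k c))"
        unfolding r_def by (simp add: algebra_simps sum_subtractf sum_distrib_left)
      also have "(\<Sum>c<n. cnj (w l c) * e c) = cnj (w l b)" unfolding e_def using b
        by (simp add: if_distrib cong: if_cong)
      also have "(\<Sum>c<n. \<Sum>k\<in>K. cnj (w k b) * (cnj (w l c) * w k c)) = (\<Sum>k\<in>K. \<Sum>c<n. cnj (w k b) * (cnj (w l c) * w k c))"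
        by (rule sum.swap)
      also have "\<dots> = (\<Sum>k\<in>K. cnj (w k b) * (if l = k then 1 else 0))"
        using on l unfolding orthonormal_def by (simp add: sum_distrib_left[symmetric])
      also have "\<dots> = cnj (w l b)" using l fin by (simp add: if_distrib cong: if_cong)
      finally show "(\<Sum>c<n. cnj (w l c) * r c) = 0" by simp
    qed
    also have "0 + (\<Sum>k\<in>K. cnj (w k b) * app n S (w k) a) = specmat n K (\<lambda>k. complex_of_real (sqrt (lam k))) w $$ (a,b)"
      unfolding specmat_def using a b by (simp add: eig algebra_simps)
    finally show "S$$(a,b) = specmat n K (\<lambda>k. complex_of_real (sqrt (lam k))) w $$ (a,b)" .
  qed (insert Sc, auto simp: specmat_def)
qed

lemma mat_sqrt_specmat:
  assumes fin: "finite K" and on: "orthonormal n K w" and lam: "\<And>k. k \<in> K \<Longrightarrow> lam k > 0"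
  shows "mat_sqrt n (specmat n K (\<lambda>k. complex_of_real (lam k)) w) = specmat n K (\<lambda>k. complex_of_real (sqrt (lam k))) w"
  unfolding mat_sqrt_def
proof (rule the_equality)
  show "psd n (specmat n K (\<lambda>k. complex_of_real (sqrt (lam k))) w) \<and>
    specmat n K (\<lambda>k. complex_of_real (sqrt (lam k))) w * specmat n K (\<lambda>k. complex_of_real (sqrt (lam k))) w =
    specmat n K (\<lambda>k. complex_of_real (lam k)) w"
  proof
    show "psd n (specmat n K (\<lambda>k. complex_of_real (sqrt (lam k))) w)" by (rule psd_specmat) (use lam in \<open>auto intro: less_imp_le\<close>)
    have "\<And>k. k \<in> K \<Longrightarrow> complex_of_real (sqrt (lam k)) * complex_of_real (sqrt (lam k)) = complex_of_real (lam k)"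
      using lam by (simp add: less_imp_le flip: of_real_mult)
    hence "specmat n K (\<lambda>k. complex_of_real (sqrt (lam k)) * complex_of_real (sqrt (lam k))) w = specmat n K (\<lambda>k. complex_of_real (lam k)) w"
      unfolding specmat_def by (intro cong_mat refl, simp)
    thus "specmat n K (\<lambda>k. complex_of_real (sqrt (lam k))) w * specmat n K (\<lambda>k. complex_of_real (sqrt (lam k))) w =
    specmat n K (\<lambda>k. complex_of_real (lam k)) w" using specmat_mult[OF on fin] by simp
  qed
next
  fix S assume "psd n S \<and> S * S = specmat n K (\<lambda>k. complex_of_real (lam k)) w"
  thus "S = specmat n K (\<lambda>k. complex_of_real (sqrt (lam k))) w"
    using sqrt_unique[OF fin on lam, where S=S] by simp
qed

lemma trace_specmat: assumes fin: "finite K" and on: "orthonormal n K w"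
  shows "(\<Sum>a<n. specmat n K c w $$ (a,a)) = (\<Sum>k\<in>K. c k)"
proof -
  have "(\<Sum>a<n. specmat n K c w $$ (a,a)) = (\<Sum>a<n. \<Sum>k\<in>K. c k * (cnj (w k a) * w k a))"
    unfolding specmat_def by (intro sum.cong refl, simp add: algebra_simps)
  also have "\<dots> = (\<Sum>k\<in>K. \<Sum>a<n. c k * (cnj (w k a) * w k a))" by (rule sum.swap)
  also have "\<dots> = (\<Sum>k\<in>K. c k)" using on unfolding orthonormal_def by (simp add: sum_distrib_left[symmetric])
  finally show ?thesis .
qed

lemma trace_norm_specmat:
  assumes fin: "finite K" and on: "orthonormal n K w" and lam: "\<And>k. k \<in> K \<Longrightarrow> lam k > 0"
    and P: "dim_col P = n" and PP: "dagger P * P = specmat n K (\<lambda>k. complex_of_real (lam k)) w"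
  shows "trace_norm P = (\<Sum>k\<in>K. sqrt (lam k))"
proof -
  have "trace_norm P = Re (\<Sum>a<n. specmat n K (\<lambda>k. complex_of_real (sqrt (lam k))) w $$ (a,a))"
  proof -
    have S: "mat_sqrt (dim_col P) (dagger P * P) = specmat n K (\<lambda>k. complex_of_real (sqrt (lam k))) w"
      using P PP mat_sqrt_specmat[OF fin on lam] by simp
    show ?thesis unfolding trace_norm_def Let_def S by (simp add: specmat_def)
  qed
  also have "\<dots> = (\<Sum>k\<in>K. sqrt (lam k))" unfolding trace_specmat[OF fin on] by simp
  finally show ?thesis .
qed


definition herm :: "nat \<Rightarrow> complex mat \<Rightarrow> bool" where
  "herm n H \<longleftrightarrow> (\<forall>a<n. \<forall>b<n. cnj (H$$(a,b)) = H$$(b,a))"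

lemma psd_is_herm: "psd n H \<Longrightarrow> herm n H"
  unfolding herm_def by (auto intro: sym psd_herm)

lemma herm_adj: assumes "herm n H"
  shows "(\<Sum>a<n. cnj (v a) * app n H g a) = (\<Sum>a<n. cnj (app n H v a) * g a)"
proof -
  have "(\<Sum>a<n. cnj (v a) * app n H g a) = (\<Sum>a<n. \<Sum>b<n. cnj (v a) * H$$(a,b) * g b)"
    unfolding app_def by (simp add: sum_distrib_left mult.assoc)
  also have "\<dots> = (\<Sum>b<n. \<Sum>a<n. cnj (v a) * H$$(a,b) * g b)" by (rule sum.swap)
  also have "\<dots> = (\<Sum>b<n. cnj (app n H v b) * g b)"
    unfolding app_def using assms unfolding herm_def
    by (intro sum.cong refl, auto simp: sum_distrib_left sum_distrib_right mult.commute intro!: sum.cong)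
  finally show ?thesis .
qed

lemma herm_specmat_real: "herm n (specmat n K (\<lambda>k. complex_of_real (c k)) w)"
  unfolding herm_def specmat_def by (auto simp: mult.commute mult.left_commute)

lemma norm_sq_sum: "(\<Sum>a<n. cnj (g a) * g a) = complex_of_real (\<Sum>a<n. (cmod (g a))\<^sup>2)"
  by (simp add: complex_norm_square mult.commute del: of_real_power)

lemma bessel:
  fixes n :: nat
  assumes fin: "finite K" and on: "orthonormal n K w"
  shows "(\<Sum>k\<in>K. (cmod (\<Sum>a<n. cnj (w k a) * f a))\<^sup>2) \<le> (\<Sum>a<n. (cmod (f a))\<^sup>2)"
proof -
  let ?P = "specmat n K (\<lambda>k. 1) w"
  define g where "g = (\<lambda>a. f a - app n ?P f a)"
  have hP: "herm n ?P" using herm_specmat_real[of n K "\<lambda>k. 1" w] by simp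
  have PP: "?P * ?P = ?P" using specmat_mult[OF on fin, of "\<lambda>k. 1" "\<lambda>k. 1"] by simp
  have PPf: "app n ?P (app n ?P f) a = app n ?P f a" if "a < n" for a
    using app_mult[of ?P n ?P a f] that PP by simp
  have qP: "qf n ?P f = complex_of_real (\<Sum>k\<in>K. (cmod (\<Sum>a<n. cnj (w k a) * f a))\<^sup>2)"
    unfolding qf_specmat of_real_sum
    by (intro sum.cong refl, simp add: complex_norm_square mult.commute del: of_real_power)
  have "complex_of_real (\<Sum>a<n. (cmod (g a))\<^sup>2) = (\<Sum>a<n. cnj (g a) * g a)" by (simp add: norm_sq_sum)
  also have "\<dots> = (\<Sum>a<n. cnj (f a) * f a) - (\<Sum>a<n. cnj (f a) * app n ?P f a)
      - (\<Sum>a<n. cnj (app n ?P f a) * f a) + (\<Sum>a<n. cnj (app n ?P f a) * app n ?P f a)"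
    unfolding g_def by (simp add: algebra_simps sum.distrib sum_subtractf)
  also have "(\<Sum>a<n. cnj (app n ?P f a) * f a) = (\<Sum>a<n. cnj (f a) * app n ?P f a)"
    using herm_adj[OF hP, of f f] by simp
  also have "(\<Sum>a<n. cnj (app n ?P f a) * app n ?P f a) = (\<Sum>a<n. cnj (f a) * app n ?P (app n ?P f) a)"
    using herm_adj[OF hP, of f "app n ?P f"] by simp
  also have "\<dots> = (\<Sum>a<n. cnj (f a) * app n ?P f a)" by (intro sum.cong refl, simp add: PPf)
  finally have "complex_of_real (\<Sum>a<n. (cmod (g a))\<^sup>2) = (\<Sum>a<n. cnj (f a) * f a) - qf n ?P f"
    unfolding qf_app by simp
  also have "\<dots> = complex_of_real ((\<Sum>a<n. (cmod (f a))\<^sup>2) - (\<Sum>k\<in>K. (cmod (\<Sum>a<n. cnj (w k a) * f a))\<^sup>2))"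
    unfolding qP norm_sq_sum by simp
  finally have "(\<Sum>a<n. (cmod (g a))\<^sup>2) = (\<Sum>a<n. (cmod (f a))\<^sup>2) - (\<Sum>k\<in>K. (cmod (\<Sum>a<n. cnj (w k a) * f a))\<^sup>2)"
    using of_real_eq_iff by blast
  moreover have "(\<Sum>a<n. (cmod (g a))\<^sup>2) \<ge> 0" by (intro sum_nonneg) auto
  ultimately show ?thesis by linarith
qed

lemma orthonormal_norm1: assumes "orthonormal n K w" "k \<in> K"
  shows "(\<Sum>a<n. (cmod (w k a))\<^sup>2) = 1"
proof -
  have "complex_of_real (\<Sum>a<n. (cmod (w k a))\<^sup>2) = 1"
    using assms unfolding orthonormal_def norm_sq_sum[symmetric] by auto
  thus ?thesis using of_real_eq_1_iff by blast
qed

lemma orthonormal_card: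
  fixes n :: nat
  assumes fin: "finite K" and on: "orthonormal n K w"
  shows "card K \<le> n"
proof -
  have "real (card K) = (\<Sum>k\<in>K. \<Sum>a<n. (cmod (w k a))\<^sup>2)"
    using orthonormal_norm1[OF on] by simp
  also have "\<dots> = (\<Sum>a<n. \<Sum>k\<in>K. (cmod (w k a))\<^sup>2)" by (rule sum.swap)
  also have "\<dots> \<le> (\<Sum>a<n. 1)"
  proof (rule sum_mono)
    fix a assume a: "a \<in> {..<n}"
    let ?e = "\<lambda>b. if b = a then (1::complex) else 0"
    have "(\<Sum>k\<in>K. (cmod (w k a))\<^sup>2) = (\<Sum>k\<in>K. (cmod (\<Sum>b<n. cnj (w k b) * ?e b))\<^sup>2)"
      using a by (intro sum.cong refl, simp add: if_distrib cong: if_cong)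
    also have "\<dots> \<le> (\<Sum>b<n. (cmod (?e b))\<^sup>2)" by (rule bessel[OF fin on])
    also have "\<dots> = (\<Sum>b<n. if b = a then 1 else 0)" by (intro sum.cong refl) auto
    also have "\<dots> = 1" using a by simp
    finally show "(\<Sum>k\<in>K. (cmod (w k a))\<^sup>2) \<le> 1" .
  qed
  also have "\<dots> = real n" by simp
  finally show ?thesis by simp
qed


lemma mat_mult_entry: assumes "A \<in> carrier_mat n m" "B \<in> carrier_mat m p" "i < n" "j < p"
  shows "(A * B) $$ (i,j) = (\<Sum>k<m. A$$(i,k) * B$$(k,j))"
  using assms by (simp add: scalar_prod_def lessThan_atLeast0)

lemma trace_similar: fixes A :: "complex mat" assumes sim: "similar_mat_wit A B P Q" and A: "A \<in> carrier_mat n n"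
  shows "(\<Sum>i<n. A$$(i,i)) = (\<Sum>i<n. B$$(i,i))"
proof -
  from sim A have B: "B \<in> carrier_mat n n" and P: "P \<in> carrier_mat n n" and Q: "Q \<in> carrier_mat n n"
    and QP: "Q * P = 1\<^sub>m n" and AE: "A = P * B * Q"
    unfolding similar_mat_wit_def Let_def by auto
  have "(\<Sum>i<n. A$$(i,i)) = (\<Sum>i<n. \<Sum>k<n. (\<Sum>j<n. P$$(i,j) * B$$(j,k)) * Q$$(k,i))"
  proof (intro sum.cong refl)
    fix i assume i: "i \<in> {..<n}"
    have PB: "P * B \<in> carrier_mat n n" using P B by simp
    show "A$$(i,i) = (\<Sum>k<n. (\<Sum>j<n. P$$(i,j) * B$$(j,k)) * Q$$(k,i))"
    proof -
      have "A$$(i,i) = (\<Sum>k<n. (P * B)$$(i,k) * Q$$(k,i))" unfolding AE using i by (intro mat_mult_entry[OF PB Q]) auto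
      also have "\<dots> = (\<Sum>k<n. (\<Sum>j<n. P$$(i,j) * B$$(j,k)) * Q$$(k,i))"
        using i by (intro sum.cong refl, subst mat_mult_entry[OF P B], auto)
      finally show ?thesis .
    qed
  qed
  also have "\<dots> = (\<Sum>i<n. \<Sum>k<n. \<Sum>j<n. P$$(i,j) * B$$(j,k) * Q$$(k,i))"
    by (simp add: sum_distrib_right)
  also have "\<dots> = (\<Sum>i<n. \<Sum>k<n. \<Sum>j<n. B$$(j,k) * (Q$$(k,i) * P$$(i,j)))"
    by (rule sum.cong[OF refl])+ (simp add: ac_simps)
  also have "\<dots> = (\<Sum>k<n. \<Sum>i<n. \<Sum>j<n. B$$(j,k) * (Q$$(k,i) * P$$(i,j)))" by (rule sum.swap)
  also have "\<dots> = (\<Sum>k<n. \<Sum>j<n. \<Sum>i<n. B$$(j,k) * (Q$$(k,i) * P$$(i,j)))" by (rule sum.cong[OF refl], rule sum.swap)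
  also have "\<dots> = (\<Sum>k<n. \<Sum>j<n. B$$(j,k) * (Q * P)$$(k,j))"
    using P Q by (intro sum.cong refl, simp add: scalar_prod_def lessThan_atLeast0 sum_distrib_left)
  also have "\<dots> = (\<Sum>k<n. \<Sum>j<n. if j = k then B$$(j,k) else 0)"
    unfolding QP by (intro sum.cong refl, auto)
  also have "\<dots> = (\<Sum>k<n. B$$(k,k))" by simp
  finally show ?thesis .
qed

lemma qf_unit: fixes n :: nat assumes "i < n" shows "qf n H (\<lambda>a. if a = i then 1 else 0) = H$$(i,i)"
proof -
  have "qf n H (\<lambda>a. if a = i then 1 else 0) = (\<Sum>a<n. if a = i then H$$(i,i) else 0)"
    unfolding qf_def by (rule sum.cong, auto simp: if_distrib cong: if_cong)
  thus ?thesis using assms by simp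
qed

lemma psd_diag: assumes "psd n H" "i < n" shows "Im (H$$(i,i)) = 0" "Re (H$$(i,i)) \<ge> 0"
  using psdD(1)[OF assms(1), of "\<lambda>a. if a = i then 1 else 0"] psdD(2)[OF assms(1), of "\<lambda>a. if a = i then 1 else 0"] qf_unit[OF assms(2)] by auto

lemma psd_zero_diag: assumes H: "psd n H" and d: "\<And>i. i < n \<Longrightarrow> H$$(i,i) = 0" and a: "a < n" and b: "b < n"
  shows "H$$(a,b) = 0"
proof (cases "a = b")
  case True thus ?thesis using d a by simp
next
  case False
  let ?c = "- H$$(a,b)"
  let ?f = "\<lambda>x. if x = a then ?c else if x = b then 1 else 0"
  have hr: "H$$(b,a) = cnj (H$$(a,b))" using psd_herm[OF H a b] .
  have "qf n H ?f = cnj ?c * H$$(a,b) + H$$(b,a) * ?c"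
    using qf_support2[of a n b ?f H] a b False d[OF a] d[OF b] by simp
  also have "\<dots> = - complex_of_real (2 * (cmod (H$$(a,b)))\<^sup>2)"
    unfolding hr by (simp add: complex_norm_square algebra_simps del: of_real_power)
  finally have "Re (qf n H ?f) = - 2 * (cmod (H$$(a,b)))\<^sup>2" by simp
  with psdD(2)[OF H, of ?f] have "(cmod (H$$(a,b)))\<^sup>2 \<le> 0" by simp
  thus ?thesis by simp
qed

lemma psd_trace_zero: assumes H: "psd n H" and t: "(\<Sum>i<n. H$$(i,i)) = 0" and a: "a < n" and b: "b < n"
  shows "H$$(a,b) = 0"
proof (rule psd_zero_diag[OF H _ a b])
  fix i assume i: "i < n"
  have "(\<Sum>i<n. Re (H$$(i,i))) = 0" using arg_cong[OF t, of Re] by (simp add: Re_sum)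
  hence "\<forall>i\<in>{..<n}. Re (H$$(i,i)) = 0" using psd_diag(2)[OF H]
    by (subst (asm) sum_nonneg_eq_0_iff) auto
  with psd_diag(1)[OF H i] i show "H$$(i,i) = 0" by (simp add: complex_eq_iff)
qed

lemma psd_eig:
  assumes H: "psd n H" and nz: "a0 < n" "b0 < n" "H$$(a0,b0) \<noteq> 0"
  shows "\<exists>v \<mu>. \<mu> > 0 \<and> (\<Sum>a<n. (cmod (v a))\<^sup>2) = 1 \<and> (\<forall>a<n. app n H v a = complex_of_real \<mu> * v a)"
proof -
  have Hc: "H \<in> carrier_mat n n" using psdD(3)[OF H] .
  obtain es where cp: "char_poly H = (\<Prod>e\<leftarrow>es. [:- e, 1:])" and len: "length es = n"
    using char_poly_factorized[OF Hc] by blast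
  obtain B P Q where sd: "schur_decomposition H es = (B,P,Q)" by (metis prod_cases3)
  from schur_decomposition[OF Hc cp sd] have sim: "similar_mat_wit H B P Q" and dg: "diag_mat B = es" by auto
  from sim Hc have Bc: "B \<in> carrier_mat n n" unfolding similar_mat_wit_def Let_def by auto
  have tr: "(\<Sum>i<n. H$$(i,i)) = sum_list es"
  proof -
    have "sum_list es = sum_list (map (\<lambda>i. B$$(i,i)) [0..<n])" using dg Bc unfolding diag_mat_def by auto
    also have "\<dots> = (\<Sum>i<n. B$$(i,i))" by (simp add: sum_list_distinct_conv_sum_set lessThan_atLeast0)
    finally show ?thesis using trace_similar[OF sim Hc] by simp
  qed
  have "\<exists>e\<in>set es. e \<noteq> 0"
  proof (rule ccontr)
    assume "\<not> ?thesis"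
    hence "sum_list es = 0" by (induct es) auto
    hence "(\<Sum>i<n. H$$(i,i)) = 0" using tr by simp
    from psd_trace_zero[OF H this nz(1,2)] nz(3) show False by simp
  qed
  then obtain e where e: "e \<in> set es" "e \<noteq> 0" by blast
  have "poly (char_poly H) e = 0" unfolding cp using e(1)
    by (simp add: poly_prod_list prod_list_zero_iff)
  hence "eigenvalue H e" using eigenvalue_root_char_poly[OF Hc] by simp
  then obtain v where ev: "eigenvector H v e" unfolding eigenvalue_def by blast
  hence vc: "v \<in> carrier_vec n" and v0: "v \<noteq> 0\<^sub>v n" and Hv: "H *\<^sub>v v = e \<cdot>\<^sub>v v"
    unfolding eigenvector_def using Hc by auto
  define f where "f = (\<lambda>a. v $ a)"
  have appf: "app n H f a = e * f a" if a: "a < n" for a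
  proof -
    have "app n H f a = (H *\<^sub>v v) $ a" unfolding app_def f_def using a Hc vc
      by (simp add: scalar_prod_def lessThan_atLeast0 mult.commute)
    also have "\<dots> = e * f a" unfolding Hv f_def using a vc by simp
    finally show ?thesis .
  qed
  define s where "s = (\<Sum>a<n. (cmod (f a))\<^sup>2)"
  have s0: "s > 0"
  proof -
    have "\<exists>a<n. f a \<noteq> 0"
    proof (rule ccontr)
      assume "\<not> ?thesis"
      hence "v = 0\<^sub>v n" using vc unfolding f_def by (intro eq_vecI) auto
      with v0 show False by simp
    qed
    then obtain a where a: "a < n" "f a \<noteq> 0" by blast
    have "(cmod (f a))\<^sup>2 \<le> s" unfolding s_def
      by (rule member_le_sum[of a "lessThan n" "\<lambda>a. (cmod (f a))\<^sup>2"]) (use a in auto)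
    moreover have "(cmod (f a))\<^sup>2 > 0" using a by simp
    ultimately show ?thesis by linarith
  qed
  have "qf n H f = (\<Sum>a<n. cnj (f a) * (e * f a))" unfolding qf_app by (intro sum.cong refl, simp add: appf)
  also have "\<dots> = e * complex_of_real s" unfolding s_def norm_sq_sum[symmetric]
    by (simp add: sum_distrib_left algebra_simps)
  finally have q: "qf n H f = e * complex_of_real s" .
  from psdD(1)[OF H, of f] have "Im e * s = 0" unfolding q by simp
  hence Ime: "Im e = 0" using s0 by simp
  from psdD(2)[OF H, of f] have "Re e * s \<ge> 0" unfolding q by simp
  hence "Re e \<ge> 0" using s0 by (simp add: zero_le_mult_iff)
  moreover have "Re e \<noteq> 0" using Ime e(2) by (simp add: complex_eq_iff)
  ultimately have Re0: "Re e > 0" by simp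
  have eR: "e = complex_of_real (Re e)" using Ime by (simp add: complex_eq_iff)
  define c where "c = complex_of_real (1 / sqrt s)"
  show ?thesis
  proof (intro exI conjI allI impI)
    show "Re e > 0" by (rule Re0)
    have "(\<Sum>a<n. (cmod (c * f a))\<^sup>2) = (\<Sum>a<n. (1 / s) * (cmod (f a))\<^sup>2)"
      unfolding c_def using s0 by (intro sum.cong refl, simp add: norm_mult norm_divide power_mult_distrib power_divide less_imp_le)
    also have "\<dots> = 1" using s0 unfolding s_def[symmetric] sum_distrib_left[symmetric] by simp
    finally show "(\<Sum>a<n. (cmod (c * f a))\<^sup>2) = 1" .
    fix a assume "a < n"
    thus "app n H (\<lambda>a. c * f a) a = complex_of_real (Re e) * (c * f a)"
      unfolding app_scale using appf eR by (simp add: algebra_simps)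
  qed
qed


lemma psd_of_qf: assumes "H \<in> carrier_mat n n" "\<And>f. Im (qf n H f) = 0" "\<And>f. Re (qf n H f) \<ge> 0"
  shows "psd n H"
  unfolding psd_def
proof (intro conjI ballI)
  fix v :: "complex vec" assume v: "v \<in> carrier_vec n"
  hence vv: "v = vec n (\<lambda>i. v $ i)" by auto
  have "conjugate v \<bullet> (H *\<^sub>v v) = qf n H (\<lambda>i. v $ i)"
    using qf_eq[OF assms(1), of "\<lambda>i. v $ i"] vv by simp
  thus "Im (conjugate v \<bullet> (H *\<^sub>v v)) = 0" "0 \<le> Re (conjugate v \<bullet> (H *\<^sub>v v))" using assms by auto
qed (rule assms(1))

lemma ip_cnj: "(\<Sum>a<n. cnj (g a) * f a) = cnj (\<Sum>a<n. cnj (f a) * g a)"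
  by (simp add: mult.commute)

definition deflate :: "nat \<Rightarrow> complex mat \<Rightarrow> real \<Rightarrow> (nat \<Rightarrow> complex) \<Rightarrow> complex mat" where
  "deflate n H \<mu> v = mat n n (\<lambda>(a,b). H$$(a,b) - complex_of_real \<mu> * v a * cnj (v b))"

lemma app_deflate: assumes "a < n"
  shows "app n (deflate n H \<mu> v) f a = app n H f a - complex_of_real \<mu> * v a * (\<Sum>b<n. cnj (v b) * f b)"
  unfolding app_def deflate_def using assms
  by (simp add: algebra_simps sum_subtractf sum_distrib_left)

lemma psd_deflate:
  assumes H: "psd n H" and v1: "(\<Sum>a<n. (cmod (v a))\<^sup>2) = 1" and Hv: "\<And>a. a < n \<Longrightarrow> app n H v a = complex_of_real \<mu> * v a"
  shows "psd n (deflate n H \<mu> v)"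
proof -
  have hH: "herm n H" by (rule psd_is_herm[OF H])
  have vv: "(\<Sum>a<n. cnj (v a) * v a) = 1" using v1 unfolding norm_sq_sum by simp
  have q: "qf n (deflate n H \<mu> v) f = qf n H (\<lambda>a. f a - (\<Sum>b<n. cnj (v b) * f b) * v a)" for f
  proof -
    define \<alpha> where "\<alpha> = (\<Sum>b<n. cnj (v b) * f b)"
    define g where "g = (\<lambda>a. f a - \<alpha> * v a)"
    have ag: "app n (deflate n H \<mu> v) f a = app n H g a" if a: "a < n" for a
      unfolding app_deflate[OF a] g_def app_diff app_scale \<alpha>_def[symmetric] using Hv[OF a] by (simp add: algebra_simps)
    have z: "(\<Sum>a<n. cnj (v a) * app n H g a) = 0"
    proof -
      have "(\<Sum>a<n. cnj (v a) * app n H g a) = (\<Sum>a<n. cnj (app n H v a) * g a)" by (rule herm_adj[OF hH])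
      also have "\<dots> = complex_of_real \<mu> * ((\<Sum>a<n. cnj (v a) * f a) - \<alpha> * (\<Sum>a<n. cnj (v a) * v a))"
        unfolding g_def by (simp add: Hv algebra_simps sum_subtractf sum_distrib_left)
      also have "\<dots> = 0" unfolding vv \<alpha>_def by simp
      finally show ?thesis .
    qed
    have "qf n (deflate n H \<mu> v) f = (\<Sum>a<n. cnj (f a) * app n H g a)" unfolding qf_app by (intro sum.cong refl, simp add: ag)
    also have "\<dots> = (\<Sum>a<n. cnj (g a) * app n H g a) + cnj \<alpha> * (\<Sum>a<n. cnj (v a) * app n H g a)"
      unfolding g_def by (simp add: algebra_simps sum.distrib sum_distrib_left sum_subtractf)
    also have "\<dots> = qf n H g" unfolding z qf_app by simp
    finally show ?thesis unfolding g_def \<alpha>_def .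
  qed
  show ?thesis
    by (rule psd_of_qf, unfold deflate_def, simp, unfold deflate_def[symmetric] q, insert psdD(1,2)[OF H], auto)
qed


lemma orthonormal_extend:
  assumes on: "orthonormal n {..<j} z" and v1: "(\<Sum>a<n. (cmod (v a))\<^sup>2) = 1"
    and orth: "\<And>l. l < j \<Longrightarrow> (\<Sum>a<n. cnj (z l a) * v a) = 0"
  shows "orthonormal n {..<Suc j} (z(j := v))"
  unfolding orthonormal_def
proof (intro ballI)
  fix k l assume k: "k \<in> {..<Suc j}" and l: "l \<in> {..<Suc j}"
  have vv: "(\<Sum>a<n. cnj (v a) * v a) = 1" using v1 unfolding norm_sq_sum by simp
  show "(\<Sum>a<n. cnj ((z(j := v)) k a) * (z(j := v)) l a) = (if k = l then 1 else 0)"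
  proof (cases "k = j")
    case True
    show ?thesis
    proof (cases "l = j")
      case True with \<open>k = j\<close> show ?thesis using vv by simp
    next
      case False
      hence "l < j" using l by simp
      have "(\<Sum>a<n. cnj (v a) * z l a) = cnj (\<Sum>a<n. cnj (z l a) * v a)" by (rule ip_cnj)
      with orth[OF \<open>l < j\<close>] False \<open>k = j\<close> show ?thesis by simp
    qed
  next
    case False
    hence "k < j" using k by simp
    show ?thesis
    proof (cases "l = j")
      case True with orth[OF \<open>k < j\<close>] False show ?thesis by simp
    next
      case False
      hence "l < j" using l by simp
      with \<open>k < j\<close> on \<open>k \<noteq> j\<close> False show ?thesis unfolding orthonormal_def by simp
    qed
  qed
qed

lemma spectral_step:
  fixes n :: nat
  assumes H: "psd n H" and on: "orthonormal n {..<j} z" and ker: "\<And>l a. l < j \<Longrightarrow> a < n \<Longrightarrow> app n H (z l) a = 0"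
    and nz: "a0 < n" "b0 < n" "H$$(a0,b0) \<noteq> 0"
  shows "\<exists>v \<mu>. \<mu> > 0 \<and> (\<Sum>a<n. (cmod (v a))\<^sup>2) = 1 \<and> (\<forall>a<n. app n H v a = complex_of_real \<mu> * v a)
     \<and> orthonormal n {..<Suc j} (z(j := v)) \<and> psd n (deflate n H \<mu> v)
     \<and> (\<forall>l<Suc j. \<forall>a<n. app n (deflate n H \<mu> v) ((z(j := v)) l) a = 0) \<and> Suc j \<le> n"
proof -
  obtain v \<mu> where mu: "\<mu> > 0" and v1: "(\<Sum>a<n. (cmod (v a))\<^sup>2) = 1"
    and Hv: "\<And>a. a < n \<Longrightarrow> app n H v a = complex_of_real \<mu> * v a"
    using psd_eig[OF H nz] by blast
  have hH: "herm n H" by (rule psd_is_herm[OF H])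
  have vv: "(\<Sum>a<n. cnj (v a) * v a) = 1" using v1 unfolding norm_sq_sum by simp
  have orth: "(\<Sum>a<n. cnj (z l a) * v a) = 0" if l: "l < j" for l
  proof -
    have "complex_of_real \<mu> * (\<Sum>a<n. cnj (z l a) * v a) = (\<Sum>a<n. cnj (z l a) * app n H v a)"
      by (simp add: Hv sum_distrib_left algebra_simps)
    also have "\<dots> = (\<Sum>a<n. cnj (app n H (z l) a) * v a)" by (rule herm_adj[OF hH])
    also have "\<dots> = 0" by (simp add: ker[OF l])
    finally show ?thesis using mu by simp
  qed
  have on': "orthonormal n {..<Suc j} (z(j := v))" by (rule orthonormal_extend[OF on v1 orth])
  have card: "Suc j \<le> n" using orthonormal_card[OF _ on'] by simp
  have ker': "app n (deflate n H \<mu> v) ((z(j := v)) l) a = 0" if l: "l < Suc j" and a: "a < n" for l a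
  proof (cases "l = j")
    case True
    thus ?thesis unfolding app_deflate[OF a] using Hv[OF a] vv by simp
  next
    case False
    hence lj: "l < j" using l by simp
    have "(\<Sum>b<n. cnj (v b) * z l b) = cnj (\<Sum>b<n. cnj (z l b) * v b)" by (rule ip_cnj)
    also have "\<dots> = 0" using orth[OF lj] by simp
    finally show ?thesis unfolding app_deflate[OF a] using False ker[OF lj a] by simp
  qed
  show ?thesis
    by (intro exI conjI allI impI, rule mu, rule v1, rule Hv, assumption, rule on', rule psd_deflate[OF H v1 Hv], assumption,
        rule ker', assumption+, rule card)
qed

lemma spectral_combine:
  fixes n m :: nat
  assumes H: "psd n H" and v1: "(\<Sum>a<n. (cmod (v a))\<^sup>2) = 1"
    and Hv: "\<And>a. a < n \<Longrightarrow> app n H v a = complex_of_real \<mu> * v a" and mu: "\<mu> > 0"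
    and H'v: "\<And>a. a < n \<Longrightarrow> app n (deflate n H \<mu> v) v a = 0"
    and mu': "\<And>i. i < m \<Longrightarrow> \<mu>' i > 0" and on: "orthonormal n {..<m} u"
    and H': "deflate n H \<mu> v = specmat n {..<m} (\<lambda>i. complex_of_real (\<mu>' i)) u"
  shows "\<exists>(m::nat) u \<mu>. (\<forall>i<m. \<mu> i > 0) \<and> orthonormal n {..<m} u \<and> H = specmat n {..<m} (\<lambda>i. complex_of_real (\<mu> i)) u"
proof -
  have hH': "herm n (deflate n H \<mu> v)" unfolding H' by (rule herm_specmat_real)
  have orth: "(\<Sum>a<n. cnj (u i a) * v a) = 0" if i: "i < m" for i
  proof -
    have eig: "app n (deflate n H \<mu> v) (u i) a = complex_of_real (\<mu>' i) * u i a" if a: "a < n" for a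
      unfolding H' by (rule app_specmat_w[OF a on], use i in auto)
    have "complex_of_real (\<mu>' i) * (\<Sum>a<n. cnj (u i a) * v a) = (\<Sum>a<n. cnj (app n (deflate n H \<mu> v) (u i) a) * v a)"
      by (simp add: eig sum_distrib_left algebra_simps)
    also have "\<dots> = (\<Sum>a<n. cnj (u i a) * app n (deflate n H \<mu> v) v a)" by (rule herm_adj[OF hH', symmetric])
    also have "\<dots> = 0" by (simp add: H'v)
    finally show ?thesis using mu'[OF i] by simp
  qed
  define u2 where "u2 = u(m := v)"
  define \<mu>2 where "\<mu>2 = \<mu>'(m := \<mu>)"
  show ?thesis
  proof (intro exI conjI allI impI)
    show "orthonormal n {..<Suc m} u2" unfolding u2_def by (rule orthonormal_extend[OF on v1 orth])
    fix i assume "i < Suc m" thus "\<mu>2 i > 0" unfolding \<mu>2_def using mu mu' by (cases "i = m") auto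
  next
    have Hc: "H \<in> carrier_mat n n" using psdD(3)[OF H] .
    show "H = specmat n {..<Suc m} (\<lambda>i. complex_of_real (\<mu>2 i)) u2"
    proof (rule eq_matI)
      fix a b assume "a < dim_row (specmat n {..<Suc m} (\<lambda>i. complex_of_real (\<mu>2 i)) u2)"
        "b < dim_col (specmat n {..<Suc m} (\<lambda>i. complex_of_real (\<mu>2 i)) u2)"
      hence a: "a < n" and b: "b < n" by (auto simp: specmat_def)
      have "H$$(a,b) = deflate n H \<mu> v $$ (a,b) + complex_of_real \<mu> * v a * cnj (v b)"
        unfolding deflate_def using a b by simp
      also have "\<dots> = (\<Sum>i<m. complex_of_real (\<mu>' i) * u i a * cnj (u i b)) + complex_of_real \<mu> * v a * cnj (v b)"
        unfolding H' specmat_def using a b by simp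
      also have "\<dots> = (\<Sum>i<Suc m. complex_of_real (\<mu>2 i) * u2 i a * cnj (u2 i b))"
        unfolding u2_def \<mu>2_def by simp
      also have "\<dots> = specmat n {..<Suc m} (\<lambda>i. complex_of_real (\<mu>2 i)) u2 $$ (a,b)"
        unfolding specmat_def using a b by simp
      finally show "H$$(a,b) = specmat n {..<Suc m} (\<lambda>i. complex_of_real (\<mu>2 i)) u2 $$ (a,b)" .
    qed (use Hc in \<open>auto simp: specmat_def\<close>)
  qed
qed

lemma spectral_zero:
  assumes Hc: "H \<in> carrier_mat n n" and z: "\<And>a b. a < n \<Longrightarrow> b < n \<Longrightarrow> H$$(a,b) = 0"
  shows "H = specmat n {..<0::nat} (\<lambda>i. complex_of_real (\<mu> i)) u"
  by (rule eq_matI, use Hc z in \<open>auto simp: specmat_def\<close>)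

lemma spectral_aux:
  fixes n :: nat
  shows "\<forall>H j z. psd n H \<and> orthonormal n {..<j} z \<and> (\<forall>l<j. \<forall>a<n. app n H (z l) a = 0) \<and> n \<le> j + d
    \<longrightarrow> (\<exists>(m::nat) u \<mu>. (\<forall>i<m. \<mu> i > 0) \<and> orthonormal n {..<m} u \<and> H = specmat n {..<m} (\<lambda>i. complex_of_real (\<mu> i)) u)"
proof (induction d)
  case 0
  show ?case
  proof (intro allI impI, elim conjE)
    fix H j z assume H: "psd n H" and on: "orthonormal n {..<j} z" and ker: "\<forall>l<j. \<forall>a<n. app n H (z l) a = 0"
      and nj: "n \<le> j + 0"
    have "H$$(a,b) = 0" if a: "a < n" and b: "b < n" for a b
    proof (rule ccontr)
      assume "H$$(a,b) \<noteq> 0"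
      from spectral_step[OF H on _ a b this] ker have "Suc j \<le> n" by blast
      with nj show False by simp
    qed
    hence h0: "H = specmat n {..<0::nat} (\<lambda>i. complex_of_real ((\<lambda>_. 1) i)) (\<lambda>_ _. 0)"
      by (intro spectral_zero psdD(3)[OF H])
    show "\<exists>(m::nat) u \<mu>. (\<forall>i<m. \<mu> i > 0) \<and> orthonormal n {..<m} u \<and> H = specmat n {..<m} (\<lambda>i. complex_of_real (\<mu> i)) u"
      by (rule exI[of _ "0::nat"], rule exI[of _ "\<lambda>(_::nat) (_::nat). 0::complex"], rule exI[of _ "\<lambda>_::nat. 1::real"]) (use h0 in \<open>auto simp: orthonormal_def\<close>)
  qed
next
  case (Suc d)
  show ?case
  proof (intro allI impI, elim conjE)
    fix H j z assume H: "psd n H" and on: "orthonormal n {..<j} z" and ker: "\<forall>l<j. \<forall>a<n. app n H (z l) a = 0"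
      and nj: "n \<le> j + Suc d"
    show "\<exists>(m::nat) u \<mu>. (\<forall>i<m. \<mu> i > 0) \<and> orthonormal n {..<m} u \<and> H = specmat n {..<m} (\<lambda>i. complex_of_real (\<mu> i)) u"
    proof (cases "\<exists>a<n. \<exists>b<n. H$$(a,b) \<noteq> 0")
      case False
      hence h0: "H = specmat n {..<0::nat} (\<lambda>i. complex_of_real ((\<lambda>_. 1) i)) (\<lambda>_ _. 0)"
        by (intro spectral_zero psdD(3)[OF H]) auto
      show ?thesis by (rule exI[of _ "0::nat"], rule exI[of _ "\<lambda>(_::nat) (_::nat). 0::complex"], rule exI[of _ "\<lambda>_::nat. 1::real"]) (use h0 in \<open>auto simp: orthonormal_def\<close>)
    next
      case True
      then obtain a b where ab: "a < n" "b < n" "H$$(a,b) \<noteq> 0" by blast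
      from spectral_step[OF H on _ ab] ker obtain v \<mu> where
        mu: "\<mu> > 0" and v1: "(\<Sum>a<n. (cmod (v a))\<^sup>2) = 1" and Hv: "\<forall>a<n. app n H v a = complex_of_real \<mu> * v a"
        and on': "orthonormal n {..<Suc j} (z(j := v))" and H': "psd n (deflate n H \<mu> v)"
        and ker': "\<forall>l<Suc j. \<forall>a<n. app n (deflate n H \<mu> v) ((z(j := v)) l) a = 0" by blast
      have pre: "psd n (deflate n H \<mu> v) \<and> orthonormal n {..<Suc j} (z(j := v)) \<and>
          (\<forall>l<Suc j. \<forall>a<n. app n (deflate n H \<mu> v) ((z(j := v)) l) a = 0) \<and> n \<le> Suc j + d"
        using H' on' ker' nj by simp
      from Suc.IH[rule_format, OF pre]
      obtain m :: nat and u \<mu>' where mu': "\<forall>i<m. \<mu>' i > 0" and onu: "orthonormal n {..<m} u"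
        and dec: "deflate n H \<mu> v = specmat n {..<m} (\<lambda>i. complex_of_real (\<mu>' i)) u" by blast
      have H'v: "app n (deflate n H \<mu> v) v a = 0" if "a < n" for a using ker'[rule_format, of j a] that by simp
      show ?thesis by (rule spectral_combine[OF H v1 _ mu H'v _ onu dec]) (use Hv mu' in auto)
    qed
  qed
qed

lemma spectral:
  fixes n :: nat
  assumes H: "psd n H"
  shows "\<exists>(m::nat) u \<mu>. (\<forall>i<m. \<mu> i > 0) \<and> orthonormal n {..<m} u \<and> H = specmat n {..<m} (\<lambda>i. complex_of_real (\<mu> i)) u"
  using spectral_aux[of n n, rule_format, of H 0 "\<lambda>_ _. 0"] H by (auto simp: orthonormal_def)


definition coef :: "nat \<Rightarrow> (nat \<Rightarrow> nat \<Rightarrow> complex) \<Rightarrow> (nat \<Rightarrow> nat \<Rightarrow> complex) \<Rightarrow> nat \<Rightarrow> nat \<Rightarrow> complex" where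
  "coef p u M i y = (\<Sum>x<p. cnj (u i x) * M x y)"

definition gram :: "nat \<Rightarrow> nat \<Rightarrow> (nat \<Rightarrow> nat \<Rightarrow> complex) \<Rightarrow> complex mat" where
  "gram p q M = mat p p (\<lambda>(x,x'). \<Sum>y<q. M x y * cnj (M x' y))"

lemma gram_carrier[simp]: "gram p q M \<in> carrier_mat p p" unfolding gram_def by simp

lemma psd_gram: "psd p (gram p q M)"
proof (rule psd_of_qf)
  fix f
  have "qf p (gram p q M) f = (\<Sum>x<p. \<Sum>x'<p. \<Sum>y<q. (cnj (f x) * M x y) * (cnj (M x' y) * f x'))"
    unfolding qf_def gram_def by (simp add: sum_distrib_left sum_distrib_right algebra_simps)
  also have "\<dots> = (\<Sum>x<p. \<Sum>y<q. \<Sum>x'<p. (cnj (f x) * M x y) * (cnj (M x' y) * f x'))"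
    by (rule sum.cong[OF refl], rule sum.swap)
  also have "\<dots> = (\<Sum>y<q. \<Sum>x<p. \<Sum>x'<p. (cnj (f x) * M x y) * (cnj (M x' y) * f x'))" by (rule sum.swap)
  also have "\<dots> = (\<Sum>y<q. cnj (\<Sum>x<p. cnj (M x y) * f x) * (\<Sum>x<p. cnj (M x y) * f x))"
    by (simp add: sum_distrib_left sum_distrib_right mult.commute)
  also have "\<dots> = complex_of_real (\<Sum>y<q. (cmod (\<Sum>x<p. cnj (M x y) * f x))\<^sup>2)"
    unfolding of_real_sum by (intro sum.cong refl, simp add: complex_norm_square mult.commute del: of_real_power)
  finally have e: "qf p (gram p q M) f = complex_of_real (\<Sum>y<q. (cmod (\<Sum>x<p. cnj (M x y) * f x))\<^sup>2)" .
  show "Im (qf p (gram p q M) f) = 0" unfolding e by simp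
  show "Re (qf p (gram p q M) f) \<ge> 0" unfolding e by (simp add: sum_nonneg)
qed simp

context
  fixes p q m :: nat and M u :: "nat \<Rightarrow> nat \<Rightarrow> complex" and \<mu> :: "nat \<Rightarrow> real"
  assumes mu: "\<And>i. i < m \<Longrightarrow> \<mu> i > 0" and on: "orthonormal p {..<m} u"
    and dec: "gram p q M = specmat p {..<m} (\<lambda>i. complex_of_real (\<mu> i)) u"
begin

lemma gram_eig: assumes "i < m" "x < p" shows "app p (gram p q M) (u i) x = complex_of_real (\<mu> i) * u i x"
  unfolding dec by (rule app_specmat_w[OF assms(2) on], use assms in auto)

lemma coef_gram: assumes i: "i < m" and j: "j < m"
  shows "(\<Sum>y<q. cnj (coef p u M i y) * coef p u M j y) = (if i = j then complex_of_real (\<mu> i) else 0)"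
proof -
  have "(\<Sum>y<q. cnj (coef p u M i y) * coef p u M j y)
      = (\<Sum>y<q. \<Sum>x<p. \<Sum>x'<p. cnj (u j x') * (u i x * (M x' y * cnj (M x y))))"
    unfolding coef_def by (simp add: sum_distrib_left sum_distrib_right algebra_simps)
  also have "\<dots> = (\<Sum>x<p. \<Sum>y<q. \<Sum>x'<p. cnj (u j x') * (u i x * (M x' y * cnj (M x y))))" by (rule sum.swap)
  also have "\<dots> = (\<Sum>x<p. \<Sum>x'<p. \<Sum>y<q. cnj (u j x') * (u i x * (M x' y * cnj (M x y))))"
    by (rule sum.cong[OF refl], rule sum.swap)
  also have "\<dots> = (\<Sum>x'<p. \<Sum>x<p. \<Sum>y<q. cnj (u j x') * (u i x * (M x' y * cnj (M x y))))" by (rule sum.swap)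
  also have "\<dots> = (\<Sum>x'<p. cnj (u j x') * app p (gram p q M) (u i) x')"
    unfolding app_def gram_def by (intro sum.cong refl, simp add: sum_distrib_left sum_distrib_right algebra_simps)
  also have "\<dots> = (\<Sum>x'<p. complex_of_real (\<mu> i) * (cnj (u j x') * u i x'))"
    by (intro sum.cong refl, simp add: gram_eig[OF i] algebra_simps)
  also have "\<dots> = complex_of_real (\<mu> i) * (if j = i then 1 else 0)"
    using on i j unfolding orthonormal_def by (simp add: sum_distrib_left[symmetric])
  finally show ?thesis by auto
qed

lemma M_expand: assumes x: "x < p" and y: "y < q"
  shows "M x y = (\<Sum>i<m. u i x * coef p u M i y)"
proof -
  define r where "r = (\<lambda>y x. M x y - (\<Sum>i<m. u i x * coef p u M i y))"
  have perp: "(\<Sum>x<p. cnj (u k x) * r y x) = 0" if k: "k < m" for k y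
  proof -
    have "(\<Sum>x<p. cnj (u k x) * r y x) = coef p u M k y - (\<Sum>x<p. \<Sum>i<m. coef p u M i y * (cnj (u k x) * u i x))"
      unfolding r_def coef_def by (simp add: algebra_simps sum_subtractf sum_distrib_left)
    also have "(\<Sum>x<p. \<Sum>i<m. coef p u M i y * (cnj (u k x) * u i x)) = (\<Sum>i<m. \<Sum>x<p. coef p u M i y * (cnj (u k x) * u i x))"
      by (rule sum.swap)
    also have "\<dots> = (\<Sum>i<m. coef p u M i y * (if k = i then 1 else 0))"
      using on k unfolding orthonormal_def by (simp add: sum_distrib_left[symmetric])
    also have "\<dots> = coef p u M k y" using k by (simp add: if_distrib cong: if_cong)
    finally show ?thesis by simp
  qed
  have rr: "(\<Sum>x<p. cnj (r y x) * r y x) = (\<Sum>x<p. cnj (M x y) * M x y) - (\<Sum>i<m. cnj (coef p u M i y) * coef p u M i y)" for y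
  proof -
    have a: "(\<Sum>x<p. cnj (r y x) * r y x) = (\<Sum>x<p. cnj (r y x) * M x y) - (\<Sum>i<m. coef p u M i y * (\<Sum>x<p. cnj (r y x) * u i x))"
    proof -
      have "(\<Sum>x<p. cnj (r y x) * r y x) = (\<Sum>x<p. cnj (r y x) * M x y) - (\<Sum>x<p. \<Sum>i<m. coef p u M i y * (cnj (r y x) * u i x))"
        by (subst (2) r_def) (simp add: algebra_simps sum_subtractf sum_distrib_left)
      also have "(\<Sum>x<p. \<Sum>i<m. coef p u M i y * (cnj (r y x) * u i x)) = (\<Sum>i<m. \<Sum>x<p. coef p u M i y * (cnj (r y x) * u i x))"
        by (rule sum.swap)
      finally show ?thesis by (simp add: sum_distrib_left)
    qed
    have b: "(\<Sum>x<p. cnj (r y x) * u i x) = 0" if i: "i < m" for i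
      using ip_cnj[where n=p and g="r y" and f="u i"] perp[OF i, of y] by simp
    have c: "(\<Sum>x<p. cnj (r y x) * M x y) = (\<Sum>x<p. cnj (M x y) * M x y) - (\<Sum>x<p. \<Sum>i<m. cnj (coef p u M i y) * (cnj (u i x) * M x y))"
      unfolding r_def by (simp add: algebra_simps sum_subtractf sum_distrib_left)
    have d: "(\<Sum>x<p. \<Sum>i<m. cnj (coef p u M i y) * (cnj (u i x) * M x y)) = (\<Sum>i<m. cnj (coef p u M i y) * coef p u M i y)"
      by (subst sum.swap) (simp add: coef_def sum_distrib_left)
    show ?thesis unfolding a c d using b by simp
  qed
  have "(\<Sum>y<q. \<Sum>x<p. cnj (r y x) * r y x) = (\<Sum>y<q. \<Sum>x<p. cnj (M x y) * M x y) - (\<Sum>i<m. \<Sum>y<q. cnj (coef p u M i y) * coef p u M i y)"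
    unfolding rr by (simp add: sum_subtractf sum.swap[of _ "lessThan m"])
  also have "(\<Sum>i<m. \<Sum>y<q. cnj (coef p u M i y) * coef p u M i y) = (\<Sum>i<m. complex_of_real (\<mu> i))"
    by (intro sum.cong refl, simp add: coef_gram)
  also have "(\<Sum>y<q. \<Sum>x<p. cnj (M x y) * M x y) = (\<Sum>x<p. gram p q M $$ (x,x))"
    unfolding gram_def by (subst sum.swap) (simp add: mult.commute)
  also have "\<dots> = (\<Sum>i<m. complex_of_real (\<mu> i))" unfolding dec by (rule trace_specmat[OF _ on], simp)
  finally have z0: "(\<Sum>y<q. \<Sum>x<p. cnj (r y x) * r y x) = 0" by simp
  have z1: "complex_of_real (\<Sum>y<q. \<Sum>x<p. (cmod (r y x))\<^sup>2) = (\<Sum>y<q. \<Sum>x<p. cnj (r y x) * r y x)"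
    by (simp only: of_real_sum norm_sq_sum)
  have "complex_of_real (\<Sum>y<q. \<Sum>x<p. (cmod (r y x))\<^sup>2) = 0" using trans[OF z1 z0] .
  hence s0: "(\<Sum>y<q. \<Sum>x<p. (cmod (r y x))\<^sup>2) = 0" by (simp only: of_real_eq_0_iff)
  have "\<forall>y\<in>{..<q}. (\<Sum>x<p. (cmod (r y x))\<^sup>2) = 0"
    using sum_nonneg_eq_0_iff[of "lessThan q" "\<lambda>y. \<Sum>x<p. (cmod (r y x))\<^sup>2"] s0 by (simp add: sum_nonneg)
  hence "(\<Sum>x<p. (cmod (r y x))\<^sup>2) = 0" using y by simp
  hence "\<forall>x\<in>{..<p}. (cmod (r y x))\<^sup>2 = 0"
    using sum_nonneg_eq_0_iff[of "lessThan p" "\<lambda>x. (cmod (r y x))\<^sup>2"] by simp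
  hence "r y x = 0" using x by simp
  thus ?thesis unfolding r_def by simp
qed

end


definition ptmat :: "nat \<Rightarrow> (nat \<Rightarrow> nat \<times> nat) \<Rightarrow> (nat \<Rightarrow> nat \<Rightarrow> complex) \<Rightarrow> complex mat" where
  "ptmat N e M = mat N N (\<lambda>(z,z'). M (fst (e z')) (snd (e z)) * cnj (M (fst (e z)) (snd (e z'))))"

lemma sum_bij_prod: assumes "bij_betw e {..<N} ({..<p} \<times> {..<q})"
  shows "(\<Sum>w<N. g (fst (e w)) (snd (e w))) = (\<Sum>a<p. \<Sum>b<q. g a b)"
proof -
  have "(\<Sum>w<N. g (fst (e w)) (snd (e w))) = (\<Sum>w<N. (case_prod g) (e w))" by (simp add: case_prod_beta)
  also have "\<dots> = (\<Sum>ab\<in>{..<p} \<times> {..<q}. case_prod g ab)" by (rule sum.reindex_bij_betw[OF assms])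
  also have "\<dots> = (\<Sum>a<p. \<Sum>b<q. g a b)" by (simp add: sum.cartesian_product)
  finally show ?thesis .
qed

lemma sum_prod2: "(\<Sum>ij\<in>A \<times> B. f ij) = (\<Sum>i\<in>A. \<Sum>j\<in>B. f (i,j))"
  by (simp add: sum.cartesian_product)

lemma sum_prod_fst_snd: "(\<Sum>ij\<in>A \<times> B. g (fst ij) (snd ij)) = (\<Sum>i\<in>A. \<Sum>j\<in>B. g i j)"
  by (simp add: sum.cartesian_product case_prod_beta')

lemma dagger_ptmat: assumes bij: "bij_betw e {..<N} ({..<p} \<times> {..<q})"
  shows "dagger (ptmat N e M) * ptmat N e M = mat N N (\<lambda>(z,z').
     cnj (\<Sum>b<q. M (fst (e z)) b * cnj (M (fst (e z')) b)) * (\<Sum>a<p. M a (snd (e z)) * cnj (M a (snd (e z')))))"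
proof (rule eq_matI)
  fix z z' assume "z < dim_row (mat N N (\<lambda>(z,z').
     cnj (\<Sum>b<q. M (fst (e z)) b * cnj (M (fst (e z')) b)) * (\<Sum>a<p. M a (snd (e z)) * cnj (M a (snd (e z'))))))"
    "z' < dim_col (mat N N (\<lambda>(z,z').
     cnj (\<Sum>b<q. M (fst (e z)) b * cnj (M (fst (e z')) b)) * (\<Sum>a<p. M a (snd (e z)) * cnj (M a (snd (e z'))))))"
  hence z: "z < N" and z': "z' < N" by auto
  let ?x = "fst (e z)" and ?y = "snd (e z)" and ?x' = "fst (e z')" and ?y' = "snd (e z')"
  have "(dagger (ptmat N e M) * ptmat N e M) $$ (z,z') = (\<Sum>w<N. cnj (ptmat N e M $$ (w,z)) * ptmat N e M $$ (w,z'))"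
    using z z' unfolding dagger_def ptmat_def by (simp add: scalar_prod_def lessThan_atLeast0)
  also have "\<dots> = (\<Sum>w<N. (\<lambda>a b. cnj (M ?x b * cnj (M a ?y)) * (M ?x' b * cnj (M a ?y'))) (fst (e w)) (snd (e w)))"
    using z z' unfolding ptmat_def by (intro sum.cong refl, simp)
  also have "\<dots> = (\<Sum>a<p. \<Sum>b<q. cnj (M ?x b * cnj (M a ?y)) * (M ?x' b * cnj (M a ?y')))"
    by (rule sum_bij_prod[OF bij])
  also have "\<dots> = (\<Sum>a<p. \<Sum>b<q. (cnj (M ?x b) * M ?x' b) * (M a ?y * cnj (M a ?y')))"
    by (intro sum.cong refl, simp add: algebra_simps)
  also have "\<dots> = (\<Sum>b<q. \<Sum>a<p. (cnj (M ?x b) * M ?x' b) * (M a ?y * cnj (M a ?y')))"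
    by (rule sum.swap)
  also have "\<dots> = (\<Sum>b<q. cnj (M ?x b) * M ?x' b) * (\<Sum>a<p. M a ?y * cnj (M a ?y'))"
    by (simp add: sum_product)
  also have "\<dots> = cnj (\<Sum>b<q. M ?x b * cnj (M ?x' b)) * (\<Sum>a<p. M a ?y * cnj (M a ?y'))"
    by simp
  finally show "(dagger (ptmat N e M) * ptmat N e M) $$ (z,z') = mat N N (\<lambda>(z,z').
     cnj (\<Sum>b<q. M (fst (e z)) b * cnj (M (fst (e z')) b)) * (\<Sum>a<p. M a (snd (e z)) * cnj (M a (snd (e z'))))) $$ (z,z')"
    using z z' by simp
qed (auto simp: dagger_def ptmat_def)

context
  fixes p q m :: nat and M u :: "nat \<Rightarrow> nat \<Rightarrow> complex" and \<mu> :: "nat \<Rightarrow> real"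
  assumes mu: "\<And>i. i < m \<Longrightarrow> \<mu> i > 0" and on: "orthonormal p {..<m} u"
    and dec: "gram p q M = specmat p {..<m} (\<lambda>i. complex_of_real (\<mu> i)) u"
begin

lemma K_expand: assumes y: "y < q" and y': "y' < q"
  shows "(\<Sum>a<p. M a y * cnj (M a y')) = (\<Sum>j<m. coef p u M j y * cnj (coef p u M j y'))"
proof -
  have "(\<Sum>a<p. M a y * cnj (M a y')) = (\<Sum>a<p. (\<Sum>i<m. u i a * coef p u M i y) * cnj (\<Sum>j<m. u j a * coef p u M j y'))"
    by (intro sum.cong refl, simp add: M_expand[OF mu on dec] y y')
  also have "\<dots> = (\<Sum>a<p. \<Sum>i<m. \<Sum>j<m. (coef p u M i y * cnj (coef p u M j y')) * (cnj (u j a) * u i a))"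
  proof (rule sum.cong[OF refl])
    fix a
    show "(\<Sum>i<m. u i a * coef p u M i y) * cnj (\<Sum>j<m. u j a * coef p u M j y') =
      (\<Sum>i<m. \<Sum>j<m. coef p u M i y * cnj (coef p u M j y') * (cnj (u j a) * u i a))"
      by (simp only: cnj_sum sum_product, rule sum.cong[OF refl], rule sum.cong[OF refl], simp add: algebra_simps)
  qed
  also have "\<dots> = (\<Sum>i<m. \<Sum>a<p. \<Sum>j<m. (coef p u M i y * cnj (coef p u M j y')) * (cnj (u j a) * u i a))"
    by (rule sum.swap)
  also have "\<dots> = (\<Sum>i<m. \<Sum>j<m. \<Sum>a<p. (coef p u M i y * cnj (coef p u M j y')) * (cnj (u j a) * u i a))"
    by (rule sum.cong[OF refl], rule sum.swap)
  also have "\<dots> = (\<Sum>i<m. \<Sum>j<m. (coef p u M i y * cnj (coef p u M j y')) * (if j = i then 1 else 0))"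
    using on unfolding orthonormal_def by (intro sum.cong refl, simp add: sum_distrib_left[symmetric])
  also have "\<dots> = (\<Sum>j<m. coef p u M j y * cnj (coef p u M j y'))"
    by (simp add: if_distrib cong: if_cong)
  finally show ?thesis .
qed

lemma gram_cnj: assumes x: "x < p" and x': "x' < p"
  shows "cnj (\<Sum>b<q. M x b * cnj (M x' b)) = (\<Sum>i<m. complex_of_real (\<mu> i) * cnj (u i x) * u i x')"
proof -
  have "(\<Sum>b<q. M x b * cnj (M x' b)) = gram p q M $$ (x,x')" unfolding gram_def using x x' by simp
  also have "\<dots> = (\<Sum>i<m. complex_of_real (\<mu> i) * u i x * cnj (u i x'))" unfolding dec specmat_def using x x' by simp
  finally show ?thesis by (simp add: mult.commute mult.left_commute)
qed

definition phi :: "nat \<Rightarrow> (nat \<Rightarrow> nat \<times> nat) \<Rightarrow> nat \<times> nat \<Rightarrow> nat \<Rightarrow> complex" where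
  "phi N e ij z = cnj (u (fst ij) (fst (e z))) * coef p u M (snd ij) (snd (e z)) / complex_of_real (sqrt (\<mu> (snd ij)))"

lemma phi_on: assumes bij: "bij_betw e {..<N} ({..<p} \<times> {..<q})"
  shows "orthonormal N ({..<m} \<times> {..<m}) (phi N e)"
  unfolding orthonormal_def
proof (intro ballI)
  fix ij kl assume ij: "ij \<in> {..<m} \<times> {..<m}" and kl: "kl \<in> {..<m} \<times> {..<m}"
  obtain i j where ij': "ij = (i,j)" by force
  obtain k l where kl': "kl = (k,l)" by force
  from ij kl have i: "i < m" and j: "j < m" and k: "k < m" and l: "l < m" unfolding ij' kl' by auto
  let ?s = "\<lambda>j. complex_of_real (sqrt (\<mu> j))"
  have "(\<Sum>z<N. cnj (phi N e ij z) * phi N e kl z)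
     = (\<Sum>z<N. (\<lambda>a b. (cnj (u k a) * u i a) * (cnj (coef p u M j b) * coef p u M l b) / (?s j * ?s l)) (fst (e z)) (snd (e z)))"
    unfolding phi_def ij' kl' by (intro sum.cong refl, simp add: algebra_simps)
  also have "\<dots> = (\<Sum>a<p. \<Sum>b<q. (cnj (u k a) * u i a) * (cnj (coef p u M j b) * coef p u M l b) / (?s j * ?s l))"
    by (rule sum_bij_prod[OF bij])
  also have "\<dots> = (\<Sum>a<p. cnj (u k a) * u i a) * (\<Sum>b<q. cnj (coef p u M j b) * coef p u M l b) / (?s j * ?s l)"
    by (simp add: sum_product sum_divide_distrib)
  also have "\<dots> = (if k = i then 1 else 0) * (if j = l then complex_of_real (\<mu> j) else 0) / (?s j * ?s l)"
  proof -
    have cg: "(\<Sum>b<q. cnj (coef p u M j b) * coef p u M l b) = (if j = l then complex_of_real (\<mu> j) else 0)"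
      by (rule coef_gram[OF mu on dec j l])
    have cu: "(\<Sum>a<p. cnj (u k a) * u i a) = (if k = i then 1 else 0)" using on i k unfolding orthonormal_def by simp
    show ?thesis unfolding cg cu ..
  qed
  also have "\<dots> = (if ij = kl then 1 else 0)"
  proof -
    have "?s j * ?s j = complex_of_real (\<mu> j)" using mu[OF j] by (simp add: less_imp_le flip: of_real_mult)
    moreover have "\<mu> j \<noteq> 0" using mu[OF j] by simp
    ultimately show ?thesis unfolding ij' kl' by auto
  qed
  finally show "(\<Sum>z<N. cnj (phi N e ij z) * phi N e kl z) = (if ij = kl then 1 else 0)" .
qed

lemma dagger_ptmat_spec: assumes bij: "bij_betw e {..<N} ({..<p} \<times> {..<q})"
  shows "dagger (ptmat N e M) * ptmat N e M = specmat N ({..<m} \<times> {..<m}) (\<lambda>ij. complex_of_real (\<mu> (fst ij) * \<mu> (snd ij))) (phi N e)"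
  unfolding dagger_ptmat[OF bij] specmat_def
proof (rule cong_mat[OF refl refl])
  fix z z' assume z: "z < N" and z': "z' < N"
  have ez: "fst (e z) < p" "snd (e z) < q" and ez': "fst (e z') < p" "snd (e z') < q"
    using bij_betwE[OF bij] z z' by force+
  let ?x = "fst (e z)" and ?y = "snd (e z)" and ?x' = "fst (e z')" and ?y' = "snd (e z')"
  let ?c = "coef p u M"
  have "cnj (\<Sum>b<q. M ?x b * cnj (M ?x' b)) * (\<Sum>a<p. M a ?y * cnj (M a ?y'))
      = (\<Sum>i<m. complex_of_real (\<mu> i) * cnj (u i ?x) * u i ?x') * (\<Sum>j<m. ?c j ?y * cnj (?c j ?y'))"
    unfolding gram_cnj[OF ez(1) ez'(1)] K_expand[OF ez(2) ez'(2)] ..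
  also have "\<dots> = (\<Sum>i<m. \<Sum>j<m. (complex_of_real (\<mu> i) * cnj (u i ?x) * u i ?x') * (?c j ?y * cnj (?c j ?y')))"
    by (rule sum_product)
  also have "\<dots> = (\<Sum>ij\<in>{..<m} \<times> {..<m}. complex_of_real (\<mu> (fst ij) * \<mu> (snd ij)) * phi N e ij z * cnj (phi N e ij z'))"
    unfolding sum_prod2
  proof (rule sum.cong[OF refl], rule sum.cong[OF refl])
    fix i j assume i: "i \<in> {..<m}" and j: "j \<in> {..<m}"
    have sj: "cnj (complex_of_real (sqrt (\<mu> j))) * complex_of_real (sqrt (\<mu> j)) = complex_of_real (\<mu> j)"
      using mu j by (simp add: less_imp_le flip: of_real_mult)
    have "\<mu> j > 0" using mu j by simp
    hence nz: "complex_of_real (sqrt (\<mu> j)) \<noteq> 0" by simp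
    show "complex_of_real (\<mu> i) * cnj (u i ?x) * u i ?x' * (?c j ?y * cnj (?c j ?y')) =
       complex_of_real (\<mu> (fst (i,j)) * \<mu> (snd (i,j))) * phi N e (i, j) z * cnj (phi N e (i, j) z')"
      unfolding phi_def using sj nz by (simp add: field_simps)
  qed
  finally show "(case (z, z') of (z, z') \<Rightarrow> cnj (\<Sum>b<q. M (fst (e z)) b * cnj (M (fst (e z')) b)) * (\<Sum>a<p. M a (snd (e z)) * cnj (M a (snd (e z'))))) =
        (case (z, z') of (a, b) \<Rightarrow> \<Sum>k\<in>{..<m} \<times> {..<m}. complex_of_real (\<mu> (fst k) * \<mu> (snd k)) * phi N e k a * cnj (phi N e k b))"
    by simp
qed

lemma trace_norm_ptmat: assumes bij: "bij_betw e {..<N} ({..<p} \<times> {..<q})"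
  shows "trace_norm (ptmat N e M) = (\<Sum>i<m. sqrt (\<mu> i))\<^sup>2"
proof -
  have "trace_norm (ptmat N e M) = (\<Sum>ij\<in>{..<m} \<times> {..<m}. sqrt (\<mu> (fst ij) * \<mu> (snd ij)))"
    by (rule trace_norm_specmat[OF _ phi_on[OF bij] _ _ dagger_ptmat_spec[OF bij]])
       (auto simp: ptmat_def intro!: mult_pos_pos mu)
  also have "\<dots> = (\<Sum>i<m. \<Sum>j<m. sqrt (\<mu> i) * sqrt (\<mu> j))"
    unfolding sum_prod2 by (simp add: real_sqrt_mult)
  also have "\<dots> = (\<Sum>i<m. sqrt (\<mu> i))\<^sup>2" by (simp add: power2_eq_square sum_product)
  finally show ?thesis .
qed

end


lemma rank_ge_spec:
  fixes R :: "complex mat" and p m :: nat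
  assumes R: "R = specmat p {..<m} (\<lambda>i. complex_of_real (\<mu> i)) u"
    and mu: "\<And>i. i < m \<Longrightarrow> \<mu> i > 0" and on: "orthonormal p {..<m} u"
  shows "m \<le> vec_space.rank p R"
proof -
  interpret V: vec_space "TYPE(complex)" p .
  let ?C = "set (cols R)"
  have Rc: "R \<in> carrier_mat p p" unfolding R by simp
  have C: "?C \<subseteq> carrier_vec p" using Rc cols_dim by blast
  define vs where "vs = (\<lambda>i. vec p (u i))"
  have vs_c: "vs i \<in> carrier_vec p" for i unfolding vs_def by simp
  have inspan: "vs i \<in> V.span ?C" if i: "i < m" for i
  proof -
    define a where "a = (\<lambda>c. \<Sum>b\<in>{b\<in>{..<p}. col R b = c}. u i b / complex_of_real (\<mu> i))"
    have "vs i = V.lincomb a ?C"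
    proof (rule eq_vecI)
      fix x assume x: "x < dim_vec (V.lincomb a ?C)"
      hence x': "x < p" using V.lincomb_dim[OF _ C] by simp
      have "V.lincomb a ?C $ x = (\<Sum>c\<in>?C. a c * c $ x)" by (rule V.lincomb_index[OF x' C])
      also have "\<dots> = (\<Sum>c\<in>col R ` {..<p}. \<Sum>b\<in>{b\<in>{..<p}. col R b = c}. u i b / complex_of_real (\<mu> i) * col R b $ x)"
      proof -
        have "?C = col R ` {..<p}" using Rc unfolding cols_def by (auto simp: lessThan_atLeast0)
        thus ?thesis unfolding a_def by (simp add: sum_distrib_right)
      qed
      also have "\<dots> = (\<Sum>b<p. u i b / complex_of_real (\<mu> i) * col R b $ x)"
        by (rule sum.image_gen[symmetric]) simp
      also have "\<dots> = app p R (u i) x / complex_of_real (\<mu> i)"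
        unfolding app_def using Rc x' by (simp add: sum_divide_distrib algebra_simps)
      also have "\<dots> = u i x"
      proof -
        have "app p R (u i) x = complex_of_real (\<mu> i) * u i x" unfolding R by (rule app_specmat_w[OF x' on]) (use i in auto)
        thus ?thesis using mu[OF i] by simp
      qed
      finally show "vs i $ x = V.lincomb a ?C $ x" unfolding vs_def using x' by simp
    qed (simp add: vs_def V.lincomb_dim[OF _ C])
    thus ?thesis using C by (intro V.in_spanI[of _ a ?C]) auto
  qed
  have inj: "inj_on vs {..<m}"
  proof (rule inj_onI)
    fix i j assume i: "i \<in> {..<m}" and j: "j \<in> {..<m}" and e: "vs i = vs j"
    have "\<And>x. x < p \<Longrightarrow> u i x = u j x" using e unfolding vs_def by (metis index_vec)
    hence "(\<Sum>x<p. cnj (u i x) * u j x) = (\<Sum>x<p. cnj (u i x) * u i x)" by simp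
    with on i j show "i = j" unfolding orthonormal_def by (auto split: if_splits)
  qed
  have li: "V.lin_indpt (vs ` {..<m})"
  proof (rule V.finite_lin_indpt2)
    show "vs ` {..<m} \<subseteq> carrier_vec p" using vs_c by auto
    fix a assume lc: "V.lincomb a (vs ` {..<m}) = 0\<^sub>v p"
    show "\<forall>v\<in>vs ` {..<m}. a v = 0"
    proof
      fix v assume "v \<in> vs ` {..<m}"
      then obtain k where k: "k < m" and v: "v = vs k" by auto
      have "0 = (\<Sum>x<p. cnj (u k x) * V.lincomb a (vs ` {..<m}) $ x)" unfolding lc by simp
      also have "\<dots> = (\<Sum>x<p. cnj (u k x) * (\<Sum>w\<in>vs ` {..<m}. a w * w $ x))"
        by (intro sum.cong refl, subst V.lincomb_index, auto intro: vs_c)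
      also have "\<dots> = (\<Sum>x<p. cnj (u k x) * (\<Sum>i<m. a (vs i) * u i x))"
        by (intro sum.cong refl, subst sum.reindex[OF inj], simp add: vs_def)
      also have "\<dots> = (\<Sum>i<m. \<Sum>x<p. a (vs i) * (cnj (u k x) * u i x))"
        by (subst sum.swap) (simp add: sum_distrib_left algebra_simps)
      also have "\<dots> = (\<Sum>i<m. a (vs i) * (if k = i then 1 else 0))"
        using on k unfolding orthonormal_def by (simp add: sum_distrib_left[symmetric])
      also have "\<dots> = a (vs k)" using k by (simp add: if_distrib cong: if_cong)
      finally show "a v = 0" unfolding v by simp
    qed
  qed simp
  have sub: "vs ` {..<m} \<subseteq> V.span ?C" using inspan by auto
  have li2: "LinearCombinations.module.lin_indpt class_ring (V.span_vs ?C) (vs ` {..<m})"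
    using V.span_li_not_depend(2)[OF sub] li C V.span_is_submodule by blast
  have vsC: "vectorspace class_ring (V.span_vs ?C)"
    using V.span_is_subspace[OF C] V.subspace_is_vs by blast
  have "card (vs ` {..<m}) \<le> vectorspace.dim class_ring (V.span_vs ?C)"
    using vectorspace.li_le_dim(2)[OF vsC V.fin_dim_span_cols[OF Rc] _ li2] sub by simp
  moreover have "card (vs ` {..<m}) = m" using card_image[OF inj] by simp
  ultimately show ?thesis unfolding V.rank_def by simp
qed


lemma cs_sum: fixes a b :: "'a \<Rightarrow> real" assumes fin: "finite I"
  shows "(\<Sum>i\<in>I. a i * b i)\<^sup>2 \<le> (\<Sum>i\<in>I. (a i)\<^sup>2) * (\<Sum>i\<in>I. (b i)\<^sup>2)"
proof -
  have "0 \<le> (\<Sum>i\<in>I. \<Sum>j\<in>I. (a i * b j - a j * b i)\<^sup>2)" by (intro sum_nonneg) auto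
  also have "\<dots> = (\<Sum>i\<in>I. \<Sum>j\<in>I. (a i)\<^sup>2 * (b j)\<^sup>2 + (a j)\<^sup>2 * (b i)\<^sup>2 - 2 * ((a i * b i) * (a j * b j)))"
    by (intro sum.cong refl) (simp add: power2_eq_square algebra_simps)
  also have "\<dots> = 2 * ((\<Sum>i\<in>I. (a i)\<^sup>2) * (\<Sum>i\<in>I. (b i)\<^sup>2)) - 2 * (\<Sum>i\<in>I. a i * b i)\<^sup>2"
  proof -
    have e1: "(\<Sum>i\<in>I. \<Sum>j\<in>I. (a i)\<^sup>2 * (b j)\<^sup>2) = (\<Sum>i\<in>I. (a i)\<^sup>2) * (\<Sum>i\<in>I. (b i)\<^sup>2)"
      by (simp add: sum_product)
    have e2: "(\<Sum>i\<in>I. \<Sum>j\<in>I. (a j)\<^sup>2 * (b i)\<^sup>2) = (\<Sum>i\<in>I. (a i)\<^sup>2) * (\<Sum>i\<in>I. (b i)\<^sup>2)"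
      by (subst sum.swap) (simp add: sum_product mult.commute)
    have e3: "(\<Sum>i\<in>I. \<Sum>j\<in>I. (a i * b i) * (a j * b j)) = (\<Sum>i\<in>I. a i * b i)\<^sup>2"
      by (simp add: sum_product power2_eq_square)
    have "(\<Sum>i\<in>I. \<Sum>j\<in>I. (a i)\<^sup>2 * (b j)\<^sup>2 + (a j)\<^sup>2 * (b i)\<^sup>2 - 2 * ((a i * b i) * (a j * b j)))
       = (\<Sum>i\<in>I. \<Sum>j\<in>I. (a i)\<^sup>2 * (b j)\<^sup>2) + (\<Sum>i\<in>I. \<Sum>j\<in>I. (a j)\<^sup>2 * (b i)\<^sup>2)
         - 2 * (\<Sum>i\<in>I. \<Sum>j\<in>I. (a i * b i) * (a j * b j))"
      by (simp only: sum.distrib sum_subtractf sum_distrib_left[symmetric])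
    thus ?thesis unfolding e1 e2 e3 by simp
  qed
  finally show ?thesis by simp
qed

lemma lower_ind:
  fixes s :: "nat \<Rightarrow> real"
  assumes "\<And>i. i < m \<Longrightarrow> s i \<ge> 0"
  shows "(\<Sum>i<m. (s i)\<^sup>2) \<le> (\<Sum>i<m. s i)\<^sup>2 \<and>
    2 * ((\<Sum>i<m. (s i)\<^sup>2)\<^sup>2 - (\<Sum>i<m. (s i)^4)) \<le> ((\<Sum>i<m. s i)\<^sup>2 - (\<Sum>i<m. (s i)\<^sup>2))\<^sup>2"
  using assms
proof (induction m)
  case 0 then show ?case by simp
next
  case (Suc m)
  define S where "S = (\<Sum>i<m. s i)"
  define A where "A = (\<Sum>i<m. (s i)\<^sup>2)"
  define B where "B = (\<Sum>i<m. (s i)^4)"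
  define t where "t = s m"
  have IH: "A \<le> S\<^sup>2" "2 * (A\<^sup>2 - B) \<le> (S\<^sup>2 - A)\<^sup>2" using Suc unfolding S_def A_def B_def by auto
  have t0: "t \<ge> 0" unfolding t_def using Suc.prems by simp
  have S0: "S \<ge> 0" unfolding S_def using Suc.prems by (intro sum_nonneg) auto
  define X where "X = S\<^sup>2 - A"
  have X0: "X \<ge> 0" using IH(1) unfolding X_def by simp
  have St: "S * t \<ge> 0" using S0 t0 by simp
  have a: "A + t\<^sup>2 \<le> (S + t)\<^sup>2" using IH(1) St by (simp add: power2_eq_square algebra_simps)
  have "2 * ((A + t\<^sup>2)\<^sup>2 - (B + t^4)) = 2 * (A\<^sup>2 - B) + 4 * A * t\<^sup>2"
    by (simp add: power2_eq_square power4_eq_xxxx algebra_simps)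
  also have "\<dots> \<le> X\<^sup>2 + 4 * A * t\<^sup>2" using IH(2) unfolding X_def by simp
  also have "\<dots> \<le> X\<^sup>2 + 4 * A * t\<^sup>2 + (4 * S * t * X + 4 * t\<^sup>2 * X)"
    using X0 S0 t0 by (simp add: add_nonneg_nonneg)
  also have "\<dots> = ((S + t)\<^sup>2 - (A + t\<^sup>2))\<^sup>2" unfolding X_def by (simp add: power2_eq_square algebra_simps)
  finally have b: "2 * ((A + t\<^sup>2)\<^sup>2 - (B + t^4)) \<le> ((S + t)\<^sup>2 - (A + t\<^sup>2))\<^sup>2" .
  show ?case using a b unfolding S_def A_def B_def t_def by (simp add: add.commute)
qed

lemma sqrt_le_of_sq: fixes a b :: real assumes "b \<ge> 0" "a \<le> b\<^sup>2" shows "sqrt a \<le> b"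
  using real_sqrt_le_mono[OF assms(2)] assms(1) by simp

lemma pur_le1: fixes \<mu> :: "nat \<Rightarrow> real"
  assumes "\<And>i. i < m \<Longrightarrow> \<mu> i \<ge> 0" "(\<Sum>i<m. \<mu> i) = 1"
  shows "(\<Sum>i<m. (\<mu> i)\<^sup>2) \<le> 1"
  using lower_ind[of m \<mu>] assms by simp

lemma neg_lower: fixes \<mu> :: "nat \<Rightarrow> real"
  assumes mu: "\<And>i. i < m \<Longrightarrow> \<mu> i > 0" and s1: "(\<Sum>i<m. \<mu> i) = 1"
  shows "sqrt ((1 - (\<Sum>i<m. (\<mu> i)\<^sup>2)) / 2) \<le> ((\<Sum>i<m. sqrt (\<mu> i))\<^sup>2 - 1) / 2"
proof -
  have sq: "(\<Sum>i<m. (sqrt (\<mu> i))\<^sup>2) = 1" using mu s1 by (simp add: less_imp_le)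
  have s4: "(\<Sum>i<m. (sqrt (\<mu> i))^4) = (\<Sum>i<m. (\<mu> i)\<^sup>2)"
  proof (intro sum.cong refl)
    fix i assume "i \<in> {..<m}"
    hence "\<mu> i \<ge> 0" using mu by (simp add: less_imp_le)
    have "(sqrt (\<mu> i))^4 = ((sqrt (\<mu> i))\<^sup>2)\<^sup>2" by (simp flip: power_mult)
    thus "(sqrt (\<mu> i))^4 = (\<mu> i)\<^sup>2" using \<open>\<mu> i \<ge> 0\<close> by simp
  qed
  from lower_ind[of m "\<lambda>i. sqrt (\<mu> i)"] mu
  have L: "1 \<le> (\<Sum>i<m. sqrt (\<mu> i))\<^sup>2" "2 * (1 - (\<Sum>i<m. (\<mu> i)\<^sup>2)) \<le> ((\<Sum>i<m. sqrt (\<mu> i))\<^sup>2 - 1)\<^sup>2"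
    unfolding sq s4 by (auto simp: less_imp_le)
  show ?thesis
    by (rule sqrt_le_of_sq) (use L in \<open>auto simp: power_divide\<close>)
qed

lemma neg_upper: fixes \<mu> :: "nat \<Rightarrow> real"
  assumes mu: "\<And>i. i < m \<Longrightarrow> \<mu> i > 0" and s1: "(\<Sum>i<m. \<mu> i) = 1"
  shows "((\<Sum>i<m. sqrt (\<mu> i))\<^sup>2 - 1) / 2 \<le> sqrt (real m * (real m - 1) * (1 - (\<Sum>i<m. (\<mu> i)\<^sup>2))) / 2"
proof -
  let ?s = "\<lambda>i. sqrt (\<mu> i)"
  let ?c = "\<lambda>ij::nat\<times>nat. if fst ij \<noteq> snd ij then 1 else (0::real)"
  let ?x = "\<lambda>ij::nat\<times>nat. ?s (fst ij) * ?s (snd ij)"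
  define E where "E = (\<Sum>ij\<in>{..<m} \<times> {..<m}. ?c ij * (?c ij * ?x ij))"
  have sp: "(\<Sum>ij\<in>{..<m} \<times> {..<m}. f ij) = (\<Sum>i<m. \<Sum>j<m. f (i,j))" for f :: "nat \<times> nat \<Rightarrow> real"
    by (simp add: sum.cartesian_product)
  have mm: "?s i * ?s i = \<mu> i" if "i < m" for i using mu[OF that] by simp
  have ab: "\<bar>\<mu> i\<bar> = \<mu> i" if "i < m" for i by (rule abs_of_pos[OF mu[OF that]])
  have mm2: "?s i * ?s j * (?s i * ?s j) = \<mu> i * \<mu> j" if "i < m" "j < m" for i j
  proof -
    have "?s i * ?s j * (?s i * ?s j) = (?s i * ?s i) * (?s j * ?s j)" by (simp only: ac_simps)
    thus ?thesis using mm that by simp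
  qed
  have "(\<Sum>i<m. ?s i)\<^sup>2 = (\<Sum>i<m. \<Sum>j<m. ?s i * ?s j)" by (simp add: power2_eq_square sum_product)
  also have "\<dots> = (\<Sum>i<m. \<Sum>j<m. (if i = j then \<mu> i else 0) + ?c (i,j) * (?c (i,j) * ?x (i,j)))"
    by (intro sum.cong refl) (auto simp: mm ab)
  also have "\<dots> = (\<Sum>i<m. \<mu> i) + E" unfolding E_def sp by (simp add: sum.distrib)
  finally have S2: "(\<Sum>i<m. ?s i)\<^sup>2 = 1 + E" using s1 by simp
  have "E\<^sup>2 \<le> (\<Sum>ij\<in>{..<m} \<times> {..<m}. (?c ij)\<^sup>2) * (\<Sum>ij\<in>{..<m} \<times> {..<m}. (?c ij * ?x ij)\<^sup>2)"
    unfolding E_def by (rule cs_sum) simp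
  also have "(\<Sum>ij\<in>{..<m} \<times> {..<m}. (?c ij)\<^sup>2) = real m * (real m - 1)"
  proof -
    have "(\<Sum>ij\<in>{..<m} \<times> {..<m}. (?c ij)\<^sup>2) = (\<Sum>i<m. \<Sum>j<m. 1 - (if i = j then 1 else 0))"
      unfolding sp by (intro sum.cong refl) auto
    also have "\<dots> = (\<Sum>i<m. real m - 1)" by (intro sum.cong refl) (simp add: sum_subtractf)
    finally show ?thesis by simp
  qed
  also have "(\<Sum>ij\<in>{..<m} \<times> {..<m}. (?c ij * ?x ij)\<^sup>2) = 1 - (\<Sum>i<m. (\<mu> i)\<^sup>2)"
  proof -
    have "(\<Sum>ij\<in>{..<m} \<times> {..<m}. (?c ij * ?x ij)\<^sup>2) = (\<Sum>i<m. \<Sum>j<m. \<mu> i * \<mu> j - (if i = j then (\<mu> i)\<^sup>2 else 0))"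
      unfolding sp by (intro sum.cong refl) (auto simp: power2_eq_square mm2)
    also have "\<dots> = (\<Sum>i<m. \<mu> i) * (\<Sum>i<m. \<mu> i) - (\<Sum>i<m. (\<mu> i)\<^sup>2)"
      by (simp add: sum_subtractf sum_product)
    finally show ?thesis using s1 by simp
  qed
  finally have E2: "E\<^sup>2 \<le> real m * (real m - 1) * (1 - (\<Sum>i<m. (\<mu> i)\<^sup>2))" .
  have "E \<le> sqrt (E\<^sup>2)" by simp
  also have "\<dots> \<le> sqrt (real m * (real m - 1) * (1 - (\<Sum>i<m. (\<mu> i)\<^sup>2)))" by (rule real_sqrt_le_mono[OF E2])
  finally show ?thesis unfolding S2 by simp
qed


lemma final_real:
  fixes NA NB NC PA PB PC :: real and m d :: nat
  assumes d2: "d \<ge> 2" and md: "m \<le> d"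
    and UA: "NA \<le> sqrt (real m * (real m - 1) * (1 - PA)) / 2"
    and LB: "sqrt ((1 - PB) / 2) \<le> NB" and LC: "sqrt ((1 - PC) / 2) \<le> NC"
    and PA1: "PA \<le> 1" and PB1: "PB \<le> 1" and PC1: "PC \<le> 1"
    and T: "PB + PC \<le> 1 + PA"
  shows "sqrt (2 / (real d * (real d - 1))) * NA \<le> NB + NC"
proof -
  have dd: "real d * (real d - 1) > 0" using d2 by simp
  have mm: "real m * (real m - 1) \<le> real d * (real d - 1)"
  proof (cases "m = 0")
    case True thus ?thesis using dd by simp
  next
    case False
    hence "real m - 1 \<ge> 0" by simp
    moreover have "real m - 1 \<le> real d - 1" using md by simp
    ultimately show ?thesis using md by (intro mult_mono) auto
  qed
  have mm0: "real m * (real m - 1) \<ge> 0" by (cases m) auto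
  have "sqrt (2 / (real d * (real d - 1))) * NA \<le> sqrt (2 / (real d * (real d - 1))) * (sqrt (real m * (real m - 1) * (1 - PA)) / 2)"
    by (rule mult_left_mono[OF UA]) (use dd in simp)
  also have "\<dots> = sqrt (2 / (real d * (real d - 1)) * (real m * (real m - 1) * (1 - PA))) / 2"
    by (simp only: times_divide_eq_right real_sqrt_mult[symmetric])
  also have "\<dots> \<le> sqrt (2 * (1 - PA)) / 2"
  proof -
    have "2 / (real d * (real d - 1)) * (real m * (real m - 1) * (1 - PA)) = 2 * (1 - PA) * (real m * (real m - 1) / (real d * (real d - 1)))"
      by (simp add: field_simps)
    also have "\<dots> \<le> 2 * (1 - PA) * 1"
      using mm dd mm0 PA1 by (intro mult_left_mono) (auto simp: divide_le_eq_1)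
    finally show ?thesis by simp
  qed
  also have "\<dots> = sqrt ((1 - PA) / 2)"
  proof -
    have "sqrt (2 * (1 - PA)) = sqrt (4 * ((1 - PA) / 2))" by simp
    also have "\<dots> = sqrt 4 * sqrt ((1 - PA) / 2)" by (rule real_sqrt_mult)
    also have "sqrt 4 = (2::real)" by (simp add: real_sqrt_eq_iff[symmetric] flip: real_sqrt_abs[of 2, simplified])
    finally show ?thesis by simp
  qed
  also have "\<dots> \<le> sqrt ((1 - PB) / 2 + (1 - PC) / 2)" using T by (intro real_sqrt_le_mono) (simp add: field_simps)
  also have "\<dots> \<le> sqrt ((1 - PB) / 2) + sqrt ((1 - PC) / 2)"
    by (rule sqrt_add_le_add_sqrt) (use PB1 PC1 in auto)
  also have "\<dots> \<le> NB + NC" using LB LC by simp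
  finally show ?thesis .
qed


lemma divmod_bij: fixes p q :: nat assumes q: "q > 0"
  shows "bij_betw (\<lambda>z. (z div q, z mod q)) {..<p * q} ({..<p} \<times> {..<q})"
proof (rule bij_betw_byWitness[where f' = "\<lambda>(a,b). a * q + b"])
  show "\<forall>z\<in>{..<p * q}. (case (z div q, z mod q) of (a, b) \<Rightarrow> a * q + b) = z" by simp
  show "\<forall>ab\<in>{..<p} \<times> {..<q}. ((case ab of (a, b) \<Rightarrow> a * q + b) div q, (case ab of (a, b) \<Rightarrow> a * q + b) mod q) = ab"
    using q by auto
  show "(\<lambda>z. (z div q, z mod q)) ` {..<p * q} \<subseteq> {..<p} \<times> {..<q}"
    using q by (auto simp: less_mult_imp_div_less mult.commute)
  show "(\<lambda>(a, b). a * q + b) ` ({..<p} \<times> {..<q}) \<subseteq> {..<p * q}"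
  proof
    fix z assume "z \<in> (\<lambda>(a, b). a * q + b) ` ({..<p} \<times> {..<q})"
    then obtain a b where ab: "a < p" "b < q" "z = a * q + b" by auto
    have "a * q + b < a * q + q" using ab by simp
    also have "\<dots> = (a + 1) * q" by simp
    also have "\<dots> \<le> p * q" using ab by (intro mult_right_mono) auto
    finally show "z \<in> {..<p * q}" using ab by simp
  qed
qed

lemma sum_split: fixes p q :: nat assumes q: "q > 0"
  shows "(\<Sum>z<p * q. g z) = (\<Sum>a<p. \<Sum>b<q. g (a * q + b))"
proof -
  have "(\<Sum>z<p * q. g z) = (\<Sum>z<p * q. (\<lambda>a b. g (a * q + b)) (fst (z div q, z mod q)) (snd (z div q, z mod q)))"
    by simp
  also have "\<dots> = (\<Sum>a<p. \<Sum>b<q. g (a * q + b))" by (rule sum_bij_prod[OF divmod_bij[OF q]])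
  finally show ?thesis .
qed

lemma idx3_bound: fixes nA nB nC :: nat assumes "i < nA" "j < nB" "k < nC"
  shows "idx3 nB nC i j k < nA * nB * nC"
proof -
  have "j * nC + k < j * nC + nC" using assms by simp
  also have "\<dots> = (j + 1) * nC" by simp
  also have "\<dots> \<le> nB * nC" using assms by (intro mult_right_mono) auto
  finally have r: "j * nC + k < nB * nC" .
  have "i * (nB * nC) + (j * nC + k) < i * (nB * nC) + nB * nC" using r by simp
  also have "\<dots> = (i + 1) * (nB * nC)" by simp
  also have "\<dots> \<le> nA * (nB * nC)" using assms by (intro mult_right_mono) auto
  finally show ?thesis unfolding idx3_def by (simp add: mult.assoc add.assoc)
qed

lemma H1: fixes z nB nC :: nat shows "(z div nC mod nB) * nC + z mod nC = z mod (nB * nC)"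
  using mod_mult2_eq[of z nC nB] by (simp add: mult.commute)

lemma H3: fixes z nB nC :: nat shows "z div (nB * nC) * nB + z div nC mod nB = z div nC"
  using div_mult2_eq[of z nC nB] div_mult_mod_eq[of "z div nC" nB] by (simp add: mult.commute)

lemma dec_bounds: fixes z nA nB nC :: nat assumes z: "z < nA * nB * nC"
  shows "z div (nB * nC) < nA" "z div nC mod nB < nB" "z mod nC < nC"
proof -
  have pos: "nB * nC > 0" "nC > 0" "nB > 0" using z by (auto intro: ccontr)
  have "z < nA * (nB * nC)" using z by (simp add: mult.assoc)
  thus "z div (nB * nC) < nA" using pos by (simp add: div_less_iff_less_mult)
  show "z div nC mod nB < nB" using pos by simp
  show "z mod nC < nC" using pos by simp
qed

lemma proj_entry: assumes "\<psi> \<in> carrier_vec N" "u < N" "v < N"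
  shows "proj \<psi> $$ (u,v) = \<psi> $ u * cnj (\<psi> $ v)"
  using assms unfolding proj_def by simp

lemma ptrans3_entry: assumes "z < nA * nB * nC" "z' < nA * nB * nC"
  shows "ptrans3 nA nB nC tA tB tC \<rho> $$ (z,z') =
    \<rho> $$ (idx3 nB nC (if tA then z' div (nB * nC) else z div (nB * nC)) (if tB then z' div nC mod nB else z div nC mod nB) (if tC then z' mod nC else z mod nC),
          idx3 nB nC (if tA then z div (nB * nC) else z' div (nB * nC)) (if tB then z div nC mod nB else z' div nC mod nB) (if tC then z mod nC else z' mod nC))"
  using assms unfolding ptrans3_def dec3_def by simp


context
  fixes nA nB nC :: nat and \<psi> :: "complex vec"
  assumes psi: "\<psi> \<in> carrier_vec (nA * nB * nC)"
begin

lemma cutA: "ptrans3 nA nB nC True False False (proj \<psi>) =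
   ptmat (nA * nB * nC) (\<lambda>z. (z div (nB * nC), z mod (nB * nC))) (\<lambda>a b. \<psi> $ (a * (nB * nC) + b))"
proof (rule eq_matI)
  fix z z' assume "z < dim_row (ptmat (nA * nB * nC) (\<lambda>z. (z div (nB * nC), z mod (nB * nC))) (\<lambda>a b. \<psi> $ (a * (nB * nC) + b)))"
    "z' < dim_col (ptmat (nA * nB * nC) (\<lambda>z. (z div (nB * nC), z mod (nB * nC))) (\<lambda>a b. \<psi> $ (a * (nB * nC) + b)))"
  hence z: "z < nA * nB * nC" and z': "z' < nA * nB * nC" by (auto simp: ptmat_def)
  note b = dec_bounds[OF z] and b' = dec_bounds[OF z']
  have i1: "idx3 nB nC (z' div (nB * nC)) (z div nC mod nB) (z mod nC) = z' div (nB * nC) * (nB * nC) + z mod (nB * nC)"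
    unfolding idx3_def using H1[of z nC nB] by (simp add: add.assoc)
  have i2: "idx3 nB nC (z div (nB * nC)) (z' div nC mod nB) (z' mod nC) = z div (nB * nC) * (nB * nC) + z' mod (nB * nC)"
    unfolding idx3_def using H1[of z' nC nB] by (simp add: add.assoc)
  show "ptrans3 nA nB nC True False False (proj \<psi>) $$ (z,z') =
     ptmat (nA * nB * nC) (\<lambda>z. (z div (nB * nC), z mod (nB * nC))) (\<lambda>a b. \<psi> $ (a * (nB * nC) + b)) $$ (z,z')"
  proof -
    have "ptrans3 nA nB nC True False False (proj \<psi>) $$ (z,z') = proj \<psi> $$ (idx3 nB nC (z' div (nB * nC)) (z div nC mod nB) (z mod nC), idx3 nB nC (z div (nB * nC)) (z' div nC mod nB) (z' mod nC))"
      using ptrans3_entry[OF z z'] by simp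
    also have "\<dots> = \<psi> $ idx3 nB nC (z' div (nB * nC)) (z div nC mod nB) (z mod nC) * cnj (\<psi> $ idx3 nB nC (z div (nB * nC)) (z' div nC mod nB) (z' mod nC))"
      by (rule proj_entry[OF psi idx3_bound[OF b'(1) b(2) b(3)] idx3_bound[OF b(1) b'(2) b'(3)]])
    finally show ?thesis unfolding i1 i2 ptmat_def using z z' by simp
  qed
qed (auto simp: ptmat_def ptrans3_def)

lemma cutAB: "ptrans3 nA nB nC True True False (proj \<psi>) =
   ptmat (nA * nB * nC) (\<lambda>z. (z div nC, z mod nC)) (\<lambda>a b. \<psi> $ (a * nC + b))"
proof (rule eq_matI)
  fix z z' assume "z < dim_row (ptmat (nA * nB * nC) (\<lambda>z. (z div nC, z mod nC)) (\<lambda>a b. \<psi> $ (a * nC + b)))"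
    "z' < dim_col (ptmat (nA * nB * nC) (\<lambda>z. (z div nC, z mod nC)) (\<lambda>a b. \<psi> $ (a * nC + b)))"
  hence z: "z < nA * nB * nC" and z': "z' < nA * nB * nC" by (auto simp: ptmat_def)
  note b = dec_bounds[OF z] and b' = dec_bounds[OF z']
  have i1: "idx3 nB nC (z' div (nB * nC)) (z' div nC mod nB) (z mod nC) = z' div nC * nC + z mod nC"
  proof -
    have "idx3 nB nC (z' div (nB * nC)) (z' div nC mod nB) (z mod nC) = (z' div (nB * nC) * nB + z' div nC mod nB) * nC + z mod nC"
      unfolding idx3_def by (simp add: algebra_simps)
    thus ?thesis using H3[of z' nB nC] by simp
  qed
  have i2: "idx3 nB nC (z div (nB * nC)) (z div nC mod nB) (z' mod nC) = z div nC * nC + z' mod nC"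
  proof -
    have "idx3 nB nC (z div (nB * nC)) (z div nC mod nB) (z' mod nC) = (z div (nB * nC) * nB + z div nC mod nB) * nC + z' mod nC"
      unfolding idx3_def by (simp add: algebra_simps)
    thus ?thesis using H3[of z nB nC] by simp
  qed
  show "ptrans3 nA nB nC True True False (proj \<psi>) $$ (z,z') =
     ptmat (nA * nB * nC) (\<lambda>z. (z div nC, z mod nC)) (\<lambda>a b. \<psi> $ (a * nC + b)) $$ (z,z')"
  proof -
    have "ptrans3 nA nB nC True True False (proj \<psi>) $$ (z,z') = proj \<psi> $$ (idx3 nB nC (z' div (nB * nC)) (z' div nC mod nB) (z mod nC), idx3 nB nC (z div (nB * nC)) (z div nC mod nB) (z' mod nC))"
      using ptrans3_entry[OF z z'] by simp
    also have "\<dots> = \<psi> $ idx3 nB nC (z' div (nB * nC)) (z' div nC mod nB) (z mod nC) * cnj (\<psi> $ idx3 nB nC (z div (nB * nC)) (z div nC mod nB) (z' mod nC))"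
      by (rule proj_entry[OF psi idx3_bound[OF b'(1) b'(2) b(3)] idx3_bound[OF b(1) b(2) b'(3)]])
    finally show ?thesis unfolding i1 i2 ptmat_def using z z' by simp
  qed
qed (auto simp: ptmat_def ptrans3_def)

definition eAC :: "nat \<Rightarrow> nat \<times> nat" where
  "eAC z = (z div (nB * nC) * nC + z mod nC, z div nC mod nB)"

definition MAC :: "nat \<Rightarrow> nat \<Rightarrow> complex" where
  "MAC a b = \<psi> $ idx3 nB nC (a div nC) b (a mod nC)"

lemma cutAC: "ptrans3 nA nB nC True False True (proj \<psi>) = ptmat (nA * nB * nC) eAC MAC"
proof (rule eq_matI)
  fix z z' assume "z < dim_row (ptmat (nA * nB * nC) eAC MAC)" "z' < dim_col (ptmat (nA * nB * nC) eAC MAC)"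
  hence z: "z < nA * nB * nC" and z': "z' < nA * nB * nC" by (auto simp: ptmat_def)
  note b = dec_bounds[OF z] and b' = dec_bounds[OF z']
  have pos: "nC > 0" using b(3) by simp
  have e1: "(z div (nB * nC) * nC + z mod nC) div nC = z div (nB * nC)" "(z div (nB * nC) * nC + z mod nC) mod nC = z mod nC"
    using pos by auto
  have e2: "(z' div (nB * nC) * nC + z' mod nC) div nC = z' div (nB * nC)" "(z' div (nB * nC) * nC + z' mod nC) mod nC = z' mod nC"
    using pos by auto
  show "ptrans3 nA nB nC True False True (proj \<psi>) $$ (z,z') = ptmat (nA * nB * nC) eAC MAC $$ (z,z')"
  proof -
    have "ptrans3 nA nB nC True False True (proj \<psi>) $$ (z,z') = proj \<psi> $$ (idx3 nB nC (z' div (nB * nC)) (z div nC mod nB) (z' mod nC), idx3 nB nC (z div (nB * nC)) (z' div nC mod nB) (z mod nC))"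
      using ptrans3_entry[OF z z'] by simp
    also have "\<dots> = \<psi> $ idx3 nB nC (z' div (nB * nC)) (z div nC mod nB) (z' mod nC) * cnj (\<psi> $ idx3 nB nC (z div (nB * nC)) (z' div nC mod nB) (z mod nC))"
      by (rule proj_entry[OF psi idx3_bound[OF b'(1) b(2) b'(3)] idx3_bound[OF b(1) b'(2) b(3)]])
    finally show ?thesis unfolding ptmat_def eAC_def MAC_def using z z' e1 e2 by simp
  qed
qed (auto simp: ptmat_def ptrans3_def)

end


context
  fixes nA nB nC :: nat and \<Psi> :: "nat \<Rightarrow> nat \<Rightarrow> nat \<Rightarrow> complex"
begin

definition XX :: "(nat \<times> nat \<times> nat) set" where "XX = {..<nA} \<times> {..<nB} \<times> {..<nC}"

definition aa :: "(nat \<times> nat \<times> nat) \<times> (nat \<times> nat \<times> nat) \<Rightarrow> complex" where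
  "aa y = (case y of ((i,j,k),(i',j',k')) \<Rightarrow> \<Psi> i j k * \<Psi> i' j' k')"

definition sB :: "(nat \<times> nat \<times> nat) \<times> (nat \<times> nat \<times> nat) \<Rightarrow> (nat \<times> nat \<times> nat) \<times> (nat \<times> nat \<times> nat)" where
  "sB y = (case y of ((i,j,k),(i',j',k')) \<Rightarrow> ((i,j',k),(i',j,k')))"

definition sC :: "(nat \<times> nat \<times> nat) \<times> (nat \<times> nat \<times> nat) \<Rightarrow> (nat \<times> nat \<times> nat) \<times> (nat \<times> nat \<times> nat)" where
  "sC y = (case y of ((i,j,k),(i',j',k')) \<Rightarrow> ((i,j,k'),(i',j',k)))"

lemma sB_inv[simp]: "sB (sB y) = y" unfolding sB_def by (auto split: prod.splits)
lemma sC_inv[simp]: "sC (sC y) = y" unfolding sC_def by (auto split: prod.splits)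
lemma sBC_comm: "sB (sC y) = sC (sB y)" unfolding sB_def sC_def by (auto split: prod.splits)

lemma sB_in: "y \<in> XX \<times> XX \<Longrightarrow> sB y \<in> XX \<times> XX" unfolding sB_def XX_def by (auto split: prod.splits)
lemma sC_in: "y \<in> XX \<times> XX \<Longrightarrow> sC y \<in> XX \<times> XX" unfolding sC_def XX_def by (auto split: prod.splits)

lemma inv_sum:
  assumes inv: "\<And>y. s (s y) = y" and inS: "\<And>y. y \<in> XX \<times> XX \<Longrightarrow> s y \<in> XX \<times> XX"
  shows "(\<Sum>y\<in>XX \<times> XX. f (s y)) = (\<Sum>y\<in>XX \<times> XX. f y)"
proof -
  have bij: "bij_betw s (XX \<times> XX) (XX \<times> XX)"
    by (rule bij_betw_byWitness[where f'=s], simp add: inv, simp add: inv, use inS in blast, use inS in blast)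
  show ?thesis by (rule sum.reindex_bij_betw[OF bij])
qed

lemma invB: "(\<Sum>y\<in>XX \<times> XX. f (sB y)) = (\<Sum>y\<in>XX \<times> XX. f y)" by (rule inv_sum[OF sB_inv sB_in])
lemma invC: "(\<Sum>y\<in>XX \<times> XX. f (sC y)) = (\<Sum>y\<in>XX \<times> XX. f y)" by (rule inv_sum[OF sC_inv sC_in])

lemma sum_YY: "(\<Sum>y\<in>XX \<times> XX. f y) = (\<Sum>i<nA. \<Sum>j<nB. \<Sum>k<nC. \<Sum>i'<nA. \<Sum>j'<nB. \<Sum>k'<nC. f ((i,j,k),(i',j',k')))"
proof -
  have 2: "\<And>g A B. (\<Sum>ij\<in>A \<times> B. g ij) = (\<Sum>i\<in>A. \<Sum>j\<in>B. g (i,j))" by (simp add: sum.cartesian_product)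
  show ?thesis unfolding XX_def by (simp only: 2)
qed

definition sBC where "sBC y = sB (sC y)"
lemma sBC_inv: "sBC (sBC y) = y" unfolding sBC_def by (simp add: sBC_comm)
lemma sBC_in: "y \<in> XX \<times> XX \<Longrightarrow> sBC y \<in> XX \<times> XX" unfolding sBC_def by (intro sB_in sC_in)
lemma invBC: "(\<Sum>y\<in>XX \<times> XX. f (sBC y)) = (\<Sum>y\<in>XX \<times> XX. f y)" by (rule inv_sum[OF sBC_inv sBC_in])

definition VV where "VV g = (\<Sum>y\<in>XX \<times> XX. aa y * cnj (aa (g y)))"

lemma shiftB: "(\<Sum>y\<in>XX \<times> XX. aa (sB y) * cnj (aa (h y))) = VV (\<lambda>y. h (sB y))"
  unfolding VV_def using invB[of "\<lambda>y. aa y * cnj (aa (h (sB y)))"] by simp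
lemma shiftC: "(\<Sum>y\<in>XX \<times> XX. aa (sC y) * cnj (aa (h y))) = VV (\<lambda>y. h (sC y))"
  unfolding VV_def using invC[of "\<lambda>y. aa y * cnj (aa (h (sC y)))"] by simp
lemma shiftBC: "(\<Sum>y\<in>XX \<times> XX. aa (sBC y) * cnj (aa (h y))) = VV (\<lambda>y. h (sBC y))"
  unfolding VV_def using invBC[of "\<lambda>y. aa y * cnj (aa (h (sBC y)))"] by (simp add: sBC_inv)

lemma T_expand:
  "(\<Sum>y\<in>XX \<times> XX. (aa y - aa (sB y) - aa (sC y) + aa (sBC y)) * cnj (aa y - aa (sB y) - aa (sC y) + aa (sBC y)))
   = 4 * VV (\<lambda>y. y) - 4 * VV sB - 4 * VV sC + 4 * VV sBC"
proof -
  let ?S = "\<lambda>f g. (\<Sum>y\<in>XX \<times> XX. aa (f y) * cnj (aa (g y)))"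
  have e: "(\<Sum>y\<in>XX \<times> XX. (aa y - aa (sB y) - aa (sC y) + aa (sBC y)) * cnj (aa y - aa (sB y) - aa (sC y) + aa (sBC y)))
     = ?S id id - ?S id sB - ?S id sC + ?S id sBC
     - ?S sB id + ?S sB sB + ?S sB sC - ?S sB sBC
     - ?S sC id + ?S sC sB + ?S sC sC - ?S sC sBC
     + ?S sBC id - ?S sBC sB - ?S sBC sC + ?S sBC sBC"
    by (simp add: algebra_simps sum.distrib sum_subtractf)
  have c1: "sB (sC y) = sBC y" "sC (sB y) = sBC y" "sB (sBC y) = sC y" "sC (sBC y) = sB y" "sBC (sB y) = sC y" "sBC (sC y) = sB y" for y
    unfolding sBC_def by (simp_all add: sBC_comm)
  have i: "?S id g = VV g" for g unfolding VV_def by simp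
  have b: "?S sB g = VV (\<lambda>y. g (sB y))" for g using shiftB[of g] by simp
  have c: "?S sC g = VV (\<lambda>y. g (sC y))" for g using shiftC[of g] by simp
  have d: "?S sBC g = VV (\<lambda>y. g (sBC y))" for g using shiftBC[of g] by simp
  show ?thesis unfolding e i b c d by (simp add: c1 sBC_inv o_def)
qed

lemma VV_id: "VV (\<lambda>y. y) = (\<Sum>i<nA. \<Sum>j<nB. \<Sum>k<nC. \<Psi> i j k * cnj (\<Psi> i j k)) * (\<Sum>i<nA. \<Sum>j<nB. \<Sum>k<nC. \<Psi> i j k * cnj (\<Psi> i j k))"
proof -
  have "VV (\<lambda>y. y) = (\<Sum>i<nA. \<Sum>j<nB. \<Sum>k<nC. \<Sum>i'<nA. \<Sum>j'<nB. \<Sum>k'<nC.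
      \<Psi> i j k * \<Psi> i' j' k' * (cnj (\<Psi> i j k) * cnj (\<Psi> i' j' k')))"
    unfolding VV_def sum_YY aa_def by simp
  also have "\<dots> = (\<Sum>i<nA. \<Sum>j<nB. \<Sum>i'<nA. \<Sum>k<nC. \<Sum>j'<nB. \<Sum>k'<nC.
      \<Psi> i j k * \<Psi> i' j' k' * (cnj (\<Psi> i j k) * cnj (\<Psi> i' j' k')))"
    by (rule sum.cong[OF refl], rule sum.cong[OF refl], rule sum.swap)
  also have "\<dots> = (\<Sum>i<nA. \<Sum>i'<nA. \<Sum>j<nB. \<Sum>k<nC. \<Sum>j'<nB. \<Sum>k'<nC.
      \<Psi> i j k * \<Psi> i' j' k' * (cnj (\<Psi> i j k) * cnj (\<Psi> i' j' k')))"
    by (rule sum.cong[OF refl], rule sum.swap)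
  also have "\<dots> = (\<Sum>i<nA. \<Sum>i'<nA. \<Sum>j<nB. \<Sum>j'<nB. \<Sum>k<nC. \<Sum>k'<nC.
      \<Psi> i j k * \<Psi> i' j' k' * (cnj (\<Psi> i j k) * cnj (\<Psi> i' j' k')))"
    by (rule sum.cong[OF refl], rule sum.cong[OF refl], rule sum.cong[OF refl], rule sum.swap)
  also have "\<dots> = (\<Sum>i<nA. \<Sum>j<nB. \<Sum>k<nC. \<Psi> i j k * cnj (\<Psi> i j k)) * (\<Sum>i<nA. \<Sum>j<nB. \<Sum>k<nC. \<Psi> i j k * cnj (\<Psi> i j k))"
    by (simp only: sum_product, (rule sum.cong[OF refl])+, simp add: ac_simps)
  finally show ?thesis .
qed

lemma VV_B: "VV sB = (\<Sum>i<nA. \<Sum>k<nC. \<Sum>i'<nA. \<Sum>k'<nC.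
    (\<Sum>j<nB. \<Psi> i j k * cnj (\<Psi> i' j k')) * cnj (\<Sum>j<nB. \<Psi> i j k * cnj (\<Psi> i' j k')))"
proof -
  have "VV sB = (\<Sum>i<nA. \<Sum>j<nB. \<Sum>k<nC. \<Sum>i'<nA. \<Sum>j'<nB. \<Sum>k'<nC.
      \<Psi> i j k * \<Psi> i' j' k' * (cnj (\<Psi> i j' k) * cnj (\<Psi> i' j k')))"
    unfolding VV_def sum_YY aa_def sB_def by simp
  also have "\<dots> = (\<Sum>i<nA. \<Sum>k<nC. \<Sum>j<nB. \<Sum>i'<nA. \<Sum>j'<nB. \<Sum>k'<nC.
      \<Psi> i j k * \<Psi> i' j' k' * (cnj (\<Psi> i j' k) * cnj (\<Psi> i' j k')))"
    by (rule sum.cong[OF refl], rule sum.swap)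
  also have "\<dots> = (\<Sum>i<nA. \<Sum>k<nC. \<Sum>i'<nA. \<Sum>j<nB. \<Sum>j'<nB. \<Sum>k'<nC.
      \<Psi> i j k * \<Psi> i' j' k' * (cnj (\<Psi> i j' k) * cnj (\<Psi> i' j k')))"
    by (rule sum.cong[OF refl], rule sum.cong[OF refl], rule sum.swap)
  also have "\<dots> = (\<Sum>i<nA. \<Sum>k<nC. \<Sum>i'<nA. \<Sum>j<nB. \<Sum>k'<nC. \<Sum>j'<nB.
      \<Psi> i j k * \<Psi> i' j' k' * (cnj (\<Psi> i j' k) * cnj (\<Psi> i' j k')))"
    by (rule sum.cong[OF refl], rule sum.cong[OF refl], rule sum.cong[OF refl], rule sum.cong[OF refl], rule sum.swap)
  also have "\<dots> = (\<Sum>i<nA. \<Sum>k<nC. \<Sum>i'<nA. \<Sum>k'<nC. \<Sum>j<nB. \<Sum>j'<nB.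
      \<Psi> i j k * \<Psi> i' j' k' * (cnj (\<Psi> i j' k) * cnj (\<Psi> i' j k')))"
    by (rule sum.cong[OF refl], rule sum.cong[OF refl], rule sum.cong[OF refl], rule sum.swap)
  also have "\<dots> = (\<Sum>i<nA. \<Sum>k<nC. \<Sum>i'<nA. \<Sum>k'<nC.
    (\<Sum>j<nB. \<Psi> i j k * cnj (\<Psi> i' j k')) * cnj (\<Sum>j<nB. \<Psi> i j k * cnj (\<Psi> i' j k')))"
    by ((rule sum.cong[OF refl])+, simp only: cnj_sum sum_product, (rule sum.cong[OF refl])+, simp add: ac_simps)
  finally show ?thesis .
qed

lemma VV_C: "VV sC = (\<Sum>i<nA. \<Sum>j<nB. \<Sum>i'<nA. \<Sum>j'<nB.
    (\<Sum>k<nC. \<Psi> i j k * cnj (\<Psi> i' j' k)) * cnj (\<Sum>k<nC. \<Psi> i j k * cnj (\<Psi> i' j' k)))"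
proof -
  have "VV sC = (\<Sum>i<nA. \<Sum>j<nB. \<Sum>k<nC. \<Sum>i'<nA. \<Sum>j'<nB. \<Sum>k'<nC.
      \<Psi> i j k * \<Psi> i' j' k' * (cnj (\<Psi> i j k') * cnj (\<Psi> i' j' k)))"
    unfolding VV_def sum_YY aa_def sC_def by simp
  also have "\<dots> = (\<Sum>i<nA. \<Sum>j<nB. \<Sum>i'<nA. \<Sum>k<nC. \<Sum>j'<nB. \<Sum>k'<nC.
      \<Psi> i j k * \<Psi> i' j' k' * (cnj (\<Psi> i j k') * cnj (\<Psi> i' j' k)))"
    by (rule sum.cong[OF refl], rule sum.cong[OF refl], rule sum.swap)
  also have "\<dots> = (\<Sum>i<nA. \<Sum>j<nB. \<Sum>i'<nA. \<Sum>j'<nB. \<Sum>k<nC. \<Sum>k'<nC.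
      \<Psi> i j k * \<Psi> i' j' k' * (cnj (\<Psi> i j k') * cnj (\<Psi> i' j' k)))"
    by (rule sum.cong[OF refl], rule sum.cong[OF refl], rule sum.cong[OF refl], rule sum.swap)
  also have "\<dots> = (\<Sum>i<nA. \<Sum>j<nB. \<Sum>i'<nA. \<Sum>j'<nB.
    (\<Sum>k<nC. \<Psi> i j k * cnj (\<Psi> i' j' k)) * cnj (\<Sum>k<nC. \<Psi> i j k * cnj (\<Psi> i' j' k)))"
    by ((rule sum.cong[OF refl])+, simp only: cnj_sum sum_product, (rule sum.cong[OF refl])+, simp add: ac_simps)
  finally show ?thesis .
qed

lemma VV_BC: "VV sBC = (\<Sum>i<nA. \<Sum>i'<nA.
    (\<Sum>j<nB. \<Sum>k<nC. \<Psi> i j k * cnj (\<Psi> i' j k)) * cnj (\<Sum>j<nB. \<Sum>k<nC. \<Psi> i j k * cnj (\<Psi> i' j k)))"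
proof -
  have "VV sBC = (\<Sum>i<nA. \<Sum>j<nB. \<Sum>k<nC. \<Sum>i'<nA. \<Sum>j'<nB. \<Sum>k'<nC.
      \<Psi> i j k * \<Psi> i' j' k' * (cnj (\<Psi> i j' k') * cnj (\<Psi> i' j k)))"
    unfolding VV_def sum_YY aa_def sBC_def sB_def sC_def by simp
  also have "\<dots> = (\<Sum>i<nA. \<Sum>j<nB. \<Sum>i'<nA. \<Sum>k<nC. \<Sum>j'<nB. \<Sum>k'<nC.
      \<Psi> i j k * \<Psi> i' j' k' * (cnj (\<Psi> i j' k') * cnj (\<Psi> i' j k)))"
    by (rule sum.cong[OF refl], rule sum.cong[OF refl], rule sum.swap)
  also have "\<dots> = (\<Sum>i<nA. \<Sum>i'<nA. \<Sum>j<nB. \<Sum>k<nC. \<Sum>j'<nB. \<Sum>k'<nC.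
      \<Psi> i j k * \<Psi> i' j' k' * (cnj (\<Psi> i j' k') * cnj (\<Psi> i' j k)))"
    by (rule sum.cong[OF refl], rule sum.swap)
  also have "\<dots> = (\<Sum>i<nA. \<Sum>i'<nA. \<Sum>j<nB. \<Sum>j'<nB. \<Sum>k<nC. \<Sum>k'<nC.
      \<Psi> i j k * \<Psi> i' j' k' * (cnj (\<Psi> i j' k') * cnj (\<Psi> i' j k)))"
    by (rule sum.cong[OF refl], rule sum.cong[OF refl], rule sum.cong[OF refl], rule sum.swap)
  also have "\<dots> = (\<Sum>i<nA. \<Sum>i'<nA.
    (\<Sum>j<nB. \<Sum>k<nC. \<Psi> i j k * cnj (\<Psi> i' j k)) * cnj (\<Sum>j<nB. \<Sum>k<nC. \<Psi> i j k * cnj (\<Psi> i' j k)))"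
    by ((rule sum.cong[OF refl])+, simp only: cnj_sum sum_product, (rule sum.cong[OF refl])+, simp add: ac_simps)
  finally show ?thesis .
qed

lemma T_ineq:
  assumes N1: "(\<Sum>i<nA. \<Sum>j<nB. \<Sum>k<nC. (cmod (\<Psi> i j k))\<^sup>2) = 1"
  shows "(\<Sum>i<nA. \<Sum>k<nC. \<Sum>i'<nA. \<Sum>k'<nC. (cmod (\<Sum>j<nB. \<Psi> i j k * cnj (\<Psi> i' j k')))\<^sup>2)
       + (\<Sum>i<nA. \<Sum>j<nB. \<Sum>i'<nA. \<Sum>j'<nB. (cmod (\<Sum>k<nC. \<Psi> i j k * cnj (\<Psi> i' j' k)))\<^sup>2)
       \<le> 1 + (\<Sum>i<nA. \<Sum>i'<nA. (cmod (\<Sum>j<nB. \<Sum>k<nC. \<Psi> i j k * cnj (\<Psi> i' j k)))\<^sup>2)"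
proof -
  have cv: "\<And>z. z * cnj z = complex_of_real ((cmod z)\<^sup>2)" by (rule complex_norm_square[symmetric])
  let ?T = "\<lambda>y. aa y - aa (sB y) - aa (sC y) + aa (sBC y)"
  have "(\<Sum>y\<in>XX \<times> XX. ?T y * cnj (?T y)) = complex_of_real (\<Sum>y\<in>XX \<times> XX. (cmod (?T y))\<^sup>2)"
    by (simp only: cv of_real_sum)
  hence pos: "Re (\<Sum>y\<in>XX \<times> XX. ?T y * cnj (?T y)) \<ge> 0" by (simp add: sum_nonneg)
  have v0: "VV (\<lambda>y. y) = 1"
  proof -
    have "(\<Sum>i<nA. \<Sum>j<nB. \<Sum>k<nC. \<Psi> i j k * cnj (\<Psi> i j k)) = complex_of_real (\<Sum>i<nA. \<Sum>j<nB. \<Sum>k<nC. (cmod (\<Psi> i j k))\<^sup>2)"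
      by (simp only: cv of_real_sum)
    thus ?thesis unfolding VV_id N1 by simp
  qed
  have vB: "VV sB = complex_of_real (\<Sum>i<nA. \<Sum>k<nC. \<Sum>i'<nA. \<Sum>k'<nC. (cmod (\<Sum>j<nB. \<Psi> i j k * cnj (\<Psi> i' j k')))\<^sup>2)"
    unfolding VV_B by (simp only: cv of_real_sum)
  have vC: "VV sC = complex_of_real (\<Sum>i<nA. \<Sum>j<nB. \<Sum>i'<nA. \<Sum>j'<nB. (cmod (\<Sum>k<nC. \<Psi> i j k * cnj (\<Psi> i' j' k)))\<^sup>2)"
    unfolding VV_C by (simp only: cv of_real_sum)
  have vBC: "VV sBC = complex_of_real (\<Sum>i<nA. \<Sum>i'<nA. (cmod (\<Sum>j<nB. \<Sum>k<nC. \<Psi> i j k * cnj (\<Psi> i' j k)))\<^sup>2)"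
    unfolding VV_BC by (simp only: cv of_real_sum)
  from pos show ?thesis unfolding T_expand v0 vB vC vBC by simp
qed

end


lemma cut_generic:
  fixes N p q :: nat and e :: "nat \<Rightarrow> nat \<times> nat" and M :: "nat \<Rightarrow> nat \<Rightarrow> complex" and \<psi> :: "complex vec"
  assumes bij: "bij_betw e {..<N} ({..<p} \<times> {..<q})"
    and Me: "\<And>z. z < N \<Longrightarrow> M (fst (e z)) (snd (e z)) = \<psi> $ z"
    and n1: "(\<Sum>z<N. (cmod (\<psi> $ z))\<^sup>2) = 1"
  shows "\<exists>(m::nat) u \<mu>. (\<forall>i<m. \<mu> i > 0) \<and> orthonormal p {..<m} u
     \<and> gram p q M = specmat p {..<m} (\<lambda>i. complex_of_real (\<mu> i)) u
     \<and> (\<Sum>i<m. \<mu> i) = 1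
     \<and> (\<Sum>i<m. (\<mu> i)\<^sup>2) = (\<Sum>a<p. \<Sum>a'<p. (cmod (\<Sum>b<q. M a b * cnj (M a' b)))\<^sup>2)
     \<and> trace_norm (ptmat N e M) = (\<Sum>i<m. sqrt (\<mu> i))\<^sup>2"
proof -
  obtain m :: nat and u \<mu> where mu: "\<forall>i<m. \<mu> i > 0" and on: "orthonormal p {..<m} u"
    and dec: "gram p q M = specmat p {..<m} (\<lambda>i. complex_of_real (\<mu> i)) u"
    using spectral[OF psd_gram[of p q M]] by blast
  have mu': "\<And>i. i < m \<Longrightarrow> \<mu> i > 0" using mu by auto
  have cv: "\<And>z. z * cnj z = complex_of_real ((cmod z)\<^sup>2)" by (rule complex_norm_square[symmetric])
  have tr: "(\<Sum>a<p. gram p q M $$ (a,a)) = complex_of_real (\<Sum>i<m. \<mu> i)"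
    unfolding dec trace_specmat[OF finite_lessThan on] by simp
  have "(\<Sum>a<p. gram p q M $$ (a,a)) = (\<Sum>a<p. \<Sum>b<q. M a b * cnj (M a b))"
    unfolding gram_def by simp
  also have "\<dots> = (\<Sum>z<N. M (fst (e z)) (snd (e z)) * cnj (M (fst (e z)) (snd (e z))))"
    by (rule sum_bij_prod[OF bij, symmetric])
  also have "\<dots> = (\<Sum>z<N. \<psi> $ z * cnj (\<psi> $ z))" by (intro sum.cong refl) (simp add: Me)
  also have "\<dots> = complex_of_real (\<Sum>z<N. (cmod (\<psi> $ z))\<^sup>2)" by (simp only: cv of_real_sum)
  finally have C: "(\<Sum>a<p. gram p q M $$ (a,a)) = complex_of_real (\<Sum>z<N. (cmod (\<psi> $ z))\<^sup>2)" .
  have "complex_of_real (\<Sum>i<m. \<mu> i) = complex_of_real (\<Sum>z<N. (cmod (\<psi> $ z))\<^sup>2)" using trans[OF tr[symmetric] C] .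
  hence s1: "(\<Sum>i<m. \<mu> i) = 1" unfolding n1 by (simp only: of_real_eq_iff)
  have herm: "herm p (gram p q M)" unfolding dec by (rule herm_specmat_real)
  have "complex_of_real (\<Sum>a<p. \<Sum>a'<p. (cmod (\<Sum>b<q. M a b * cnj (M a' b)))\<^sup>2)
      = (\<Sum>a<p. \<Sum>a'<p. gram p q M $$ (a,a') * cnj (gram p q M $$ (a,a')))"
    unfolding gram_def by (simp only: cv of_real_sum, intro sum.cong refl, simp)
  also have "\<dots> = (\<Sum>a<p. \<Sum>a'<p. gram p q M $$ (a,a') * gram p q M $$ (a',a))"
    using herm unfolding herm_def by (intro sum.cong refl) simp
  also have "\<dots> = (\<Sum>a<p. (gram p q M * gram p q M) $$ (a,a))"
    by (intro sum.cong refl) (simp add: mat_mult_entry[OF gram_carrier gram_carrier])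
  also have "\<dots> = (\<Sum>i<m. complex_of_real (\<mu> i) * complex_of_real (\<mu> i))"
    unfolding dec specmat_mult[OF on finite_lessThan] trace_specmat[OF finite_lessThan on] ..
  also have "\<dots> = complex_of_real (\<Sum>i<m. (\<mu> i)\<^sup>2)" by (simp add: power2_eq_square)
  finally have pur: "(\<Sum>i<m. (\<mu> i)\<^sup>2) = (\<Sum>a<p. \<Sum>a'<p. (cmod (\<Sum>b<q. M a b * cnj (M a' b)))\<^sup>2)"
    by (simp only: of_real_eq_iff)
  have tn: "trace_norm (ptmat N e M) = (\<Sum>i<m. sqrt (\<mu> i))\<^sup>2"
    by (rule trace_norm_ptmat[OF mu' on dec bij])
  show ?thesis using mu on dec s1 pur tn by blast
qed


lemma idx3_dec: fixes z nB nC :: nat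
  shows "idx3 nB nC (z div (nB * nC)) (z div nC mod nB) (z mod nC) = z"
proof -
  have "idx3 nB nC (z div (nB * nC)) (z div nC mod nB) (z mod nC) = z div (nB * nC) * (nB * nC) + ((z div nC mod nB) * nC + z mod nC)"
    unfolding idx3_def by (simp add: add.assoc)
  also have "\<dots> = z" unfolding H1 by (rule div_mult_mod_eq)
  finally show ?thesis .
qed

lemma eAC_bij: fixes nA nB nC :: nat assumes pos: "nB > 0" "nC > 0"
  shows "bij_betw (\<lambda>z. (z div (nB * nC) * nC + z mod nC, z div nC mod nB)) {..<nA * nB * nC} ({..<nA * nC} \<times> {..<nB})"
proof (rule bij_betw_byWitness[where f' = "\<lambda>(a,b). idx3 nB nC (a div nC) b (a mod nC)"])
  show "\<forall>z\<in>{..<nA * nB * nC}. (case (z div (nB * nC) * nC + z mod nC, z div nC mod nB) of (a, b) \<Rightarrow> idx3 nB nC (a div nC) b (a mod nC)) = z"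
    using pos by (simp add: idx3_dec)
  show "\<forall>ab\<in>{..<nA * nC} \<times> {..<nB}. (\<lambda>z. (z div (nB * nC) * nC + z mod nC, z div nC mod nB))
      ((case ab of (a, b) \<Rightarrow> idx3 nB nC (a div nC) b (a mod nC))) = ab"
  proof
    fix ab assume ab: "ab \<in> {..<nA * nC} \<times> {..<nB}"
    obtain a b where abe: "ab = (a,b)" by force
    from ab have a: "a < nA * nC" and b: "b < nB" unfolding abe by auto
    define x where "x = idx3 nB nC (a div nC) b (a mod nC)"
    have r: "b * nC + a mod nC < nB * nC"
    proof -
      have "b * nC + a mod nC < b * nC + nC" using pos by simp
      also have "\<dots> = (b + 1) * nC" by simp
      also have "\<dots> \<le> nB * nC" using b by (intro mult_right_mono) auto
      finally show ?thesis .
    qed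
    have x: "x = a div nC * (nB * nC) + (b * nC + a mod nC)" unfolding x_def idx3_def by (simp add: add.assoc)
    have x1: "x div (nB * nC) = a div nC" unfolding x using r pos by simp
    have x2: "x mod nC = a mod nC" unfolding x using pos by (simp add: mod_add_left_eq[symmetric] mult.assoc[symmetric])
    have x3: "x div nC = a div nC * nB + b"
    proof -
      have "x = (a div nC * nB + b) * nC + a mod nC" unfolding x by (simp add: algebra_simps)
      thus ?thesis using pos by simp
    qed
    have x4: "x div nC mod nB = b" unfolding x3 using b by simp
    show "(\<lambda>z. (z div (nB * nC) * nC + z mod nC, z div nC mod nB)) ((case ab of (a, b) \<Rightarrow> idx3 nB nC (a div nC) b (a mod nC))) = ab"
      unfolding abe using x1 x2 x4 unfolding x_def by simp
  qed
  show "(\<lambda>z. (z div (nB * nC) * nC + z mod nC, z div nC mod nB)) ` {..<nA * nB * nC} \<subseteq> {..<nA * nC} \<times> {..<nB}"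
  proof
    fix w assume "w \<in> (\<lambda>z. (z div (nB * nC) * nC + z mod nC, z div nC mod nB)) ` {..<nA * nB * nC}"
    then obtain z where z: "z < nA * nB * nC" and w: "w = (z div (nB * nC) * nC + z mod nC, z div nC mod nB)" by auto
    note bd = dec_bounds[OF z]
    have "z div (nB * nC) * nC + z mod nC < z div (nB * nC) * nC + nC" using bd by simp
    also have "\<dots> = (z div (nB * nC) + 1) * nC" by simp
    also have "\<dots> \<le> nA * nC" using bd by (intro mult_right_mono) auto
    finally show "w \<in> {..<nA * nC} \<times> {..<nB}" unfolding w using bd by simp
  qed
  show "(\<lambda>(a, b). idx3 nB nC (a div nC) b (a mod nC)) ` ({..<nA * nC} \<times> {..<nB}) \<subseteq> {..<nA * nB * nC}"
  proof
    fix w assume "w \<in> (\<lambda>(a, b). idx3 nB nC (a div nC) b (a mod nC)) ` ({..<nA * nC} \<times> {..<nB})"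
    then obtain a b where a: "a < nA * nC" and b: "b < nB" and w: "w = idx3 nB nC (a div nC) b (a mod nC)" by auto
    have "a div nC < nA" using a pos by (simp add: div_less_iff_less_mult)
    moreover have "a mod nC < nC" using pos by simp
    ultimately show "w \<in> {..<nA * nB * nC}" unfolding w using idx3_bound b by simp
  qed
qed


theorem lemma1:
  fixes nA nB nC dA :: nat and \<psi> :: "complex vec"
  assumes "\<psi> \<in> carrier_vec (nA * nB * nC)"
    and "(\<Sum>x < nA * nB * nC. (cmod (\<psi> $ x))\<^sup>2) = 1"
    and "dA = vec_space.rank nA (reduced_A nA nB nC (proj \<psi>))"
    and "dA \<ge> 2"
  shows "sqrt (2 / (real dA * (real dA - 1))) * negativity3 nA nB nC True False False (proj \<psi>)
         \<le> negativity3 nA nB nC True False True (proj \<psi>) + negativity3 nA nB nC True True False (proj \<psi>)"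
proof -
  note psi = assms(1) and n1 = assms(2) and dAdef = assms(3) and d2 = assms(4)
  define N where "N = nA * nB * nC"
  have Npos: "N > 0"
  proof (rule ccontr)
    assume "\<not> N > 0" hence "N = 0" by simp
    with n1 show False unfolding N_def by simp
  qed
  hence pA: "nA > 0" and pB: "nB > 0" and pC: "nC > 0" unfolding N_def by auto
  define \<Psi> where "\<Psi> = (\<lambda>i j k. \<psi> $ idx3 nB nC i j k)"
  have Psi_split: "(\<Sum>b<nB * nC. g b) = (\<Sum>j<nB. \<Sum>k<nC. g (j * nC + k))" for g :: "nat \<Rightarrow> 'a::comm_monoid_add"
    by (rule sum_split[OF pC])
  have N1: "(\<Sum>i<nA. \<Sum>j<nB. \<Sum>k<nC. (cmod (\<Psi> i j k))\<^sup>2) = 1"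
  proof -
    have "(\<Sum>x<nA * (nB * nC). (cmod (\<psi> $ x))\<^sup>2) = (\<Sum>i<nA. \<Sum>b<nB * nC. (cmod (\<psi> $ (i * (nB * nC) + b)))\<^sup>2)"
      by (rule sum_split) (use pB pC in simp)
    also have "\<dots> = (\<Sum>i<nA. \<Sum>j<nB. \<Sum>k<nC. (cmod (\<Psi> i j k))\<^sup>2)"
      unfolding Psi_split \<Psi>_def idx3_def by (simp add: add.assoc)
    finally show ?thesis using n1 by (simp add: mult.assoc)
  qed
  have bijA: "bij_betw (\<lambda>z. (z div (nB * nC), z mod (nB * nC))) {..<N} ({..<nA} \<times> {..<nB * nC})"
    unfolding N_def mult.assoc by (rule divmod_bij) (use pB pC in simp)
  have n1': "(\<Sum>z<N. (cmod (\<psi> $ z))\<^sup>2) = 1" using n1 unfolding N_def .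
  obtain mA :: nat and uA \<mu>A where muA: "\<forall>i<mA. \<mu>A i > 0" and onA: "orthonormal nA {..<mA} uA"
    and decA: "gram nA (nB * nC) (\<lambda>a b. \<psi> $ (a * (nB * nC) + b)) = specmat nA {..<mA} (\<lambda>i. complex_of_real (\<mu>A i)) uA"
    and sA: "(\<Sum>i<mA. \<mu>A i) = 1"
    and pA': "(\<Sum>i<mA. (\<mu>A i)\<^sup>2) = (\<Sum>a<nA. \<Sum>a'<nA. (cmod (\<Sum>b<nB * nC. \<psi> $ (a * (nB * nC) + b) * cnj (\<psi> $ (a' * (nB * nC) + b))))\<^sup>2)"
    and tA: "trace_norm (ptmat N (\<lambda>z. (z div (nB * nC), z mod (nB * nC))) (\<lambda>a b. \<psi> $ (a * (nB * nC) + b))) = (\<Sum>i<mA. sqrt (\<mu>A i))\<^sup>2"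
  proof -
    have Me: "\<And>z. z < N \<Longrightarrow> (\<lambda>a b. \<psi> $ (a * (nB * nC) + b)) (fst (z div (nB * nC), z mod (nB * nC))) (snd (z div (nB * nC), z mod (nB * nC))) = \<psi> $ z"
      by (simp only: fst_conv snd_conv div_mult_mod_eq)
    show ?thesis using cut_generic[OF bijA Me n1'] that by blast
  qed
  have bijAB: "bij_betw (\<lambda>z. (z div nC, z mod nC)) {..<N} ({..<nA * nB} \<times> {..<nC})"
    unfolding N_def by (rule divmod_bij[OF pC])
  obtain mC :: nat and uC \<mu>C where muC: "\<forall>i<mC. \<mu>C i > 0"
    and sC: "(\<Sum>i<mC. \<mu>C i) = 1"
    and pC': "(\<Sum>i<mC. (\<mu>C i)\<^sup>2) = (\<Sum>a<nA * nB. \<Sum>a'<nA * nB. (cmod (\<Sum>b<nC. \<psi> $ (a * nC + b) * cnj (\<psi> $ (a' * nC + b))))\<^sup>2)"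
    and tC: "trace_norm (ptmat N (\<lambda>z. (z div nC, z mod nC)) (\<lambda>a b. \<psi> $ (a * nC + b))) = (\<Sum>i<mC. sqrt (\<mu>C i))\<^sup>2"
  proof -
    have Me: "\<And>z. z < N \<Longrightarrow> (\<lambda>a b. \<psi> $ (a * nC + b)) (fst (z div nC, z mod nC)) (snd (z div nC, z mod nC)) = \<psi> $ z"
      by (simp only: fst_conv snd_conv div_mult_mod_eq)
    show ?thesis using cut_generic[OF bijAB Me n1'] that by blast
  qed
  have bijAC: "bij_betw (eAC nB nC) {..<N} ({..<nA * nC} \<times> {..<nB})"
  proof -
    have "eAC nB nC = (\<lambda>z. (z div (nB * nC) * nC + z mod nC, z div nC mod nB))"
      using eAC_def[OF psi] by (intro ext) simp
    thus ?thesis unfolding N_def using eAC_bij[OF pB pC] by simp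
  qed
  have MeAC: "MAC nB nC \<psi> (fst (eAC nB nC z)) (snd (eAC nB nC z)) = \<psi> $ z" for z
  proof -
    have "(z div (nB * nC) * nC + z mod nC) div nC = z div (nB * nC)" "(z div (nB * nC) * nC + z mod nC) mod nC = z mod nC"
      using pC by auto
    thus ?thesis unfolding MAC_def[OF psi] eAC_def[OF psi] by (simp add: idx3_dec)
  qed
  obtain mB :: nat and uB \<mu>B where muB: "\<forall>i<mB. \<mu>B i > 0"
    and sB: "(\<Sum>i<mB. \<mu>B i) = 1"
    and pB': "(\<Sum>i<mB. (\<mu>B i)\<^sup>2) = (\<Sum>a<nA * nC. \<Sum>a'<nA * nC. (cmod (\<Sum>b<nB. MAC nB nC \<psi> a b * cnj (MAC nB nC \<psi> a' b)))\<^sup>2)"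
    and tB: "trace_norm (ptmat N (eAC nB nC) (MAC nB nC \<psi>)) = (\<Sum>i<mB. sqrt (\<mu>B i))\<^sup>2"
    using cut_generic[OF bijAC MeAC n1'] that by blast
  have muA': "\<And>i. i < mA \<Longrightarrow> \<mu>A i > 0" using muA by auto
  have muB': "\<And>i. i < mB \<Longrightarrow> \<mu>B i > 0" using muB by auto
  have muC': "\<And>i. i < mC \<Longrightarrow> \<mu>C i > 0" using muC by auto
  have NA: "negativity3 nA nB nC True False False (proj \<psi>) = ((\<Sum>i<mA. sqrt (\<mu>A i))\<^sup>2 - 1) / 2"
    unfolding negativity3_def cutA[OF psi] using tA unfolding N_def by simp
  have NB: "negativity3 nA nB nC True False True (proj \<psi>) = ((\<Sum>i<mB. sqrt (\<mu>B i))\<^sup>2 - 1) / 2"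
    unfolding negativity3_def cutAC[OF psi] using tB unfolding N_def by simp
  have NC: "negativity3 nA nB nC True True False (proj \<psi>) = ((\<Sum>i<mC. sqrt (\<mu>C i))\<^sup>2 - 1) / 2"
    unfolding negativity3_def cutAB[OF psi] using tC unfolding N_def by simp
  define PA where "PA = (\<Sum>i<nA. \<Sum>i'<nA. (cmod (\<Sum>j<nB. \<Sum>k<nC. \<Psi> i j k * cnj (\<Psi> i' j k)))\<^sup>2)"
  define PAC where "PAC = (\<Sum>i<nA. \<Sum>k<nC. \<Sum>i'<nA. \<Sum>k'<nC. (cmod (\<Sum>j<nB. \<Psi> i j k * cnj (\<Psi> i' j k')))\<^sup>2)"
  define PAB where "PAB = (\<Sum>i<nA. \<Sum>j<nB. \<Sum>i'<nA. \<Sum>j'<nB. (cmod (\<Sum>k<nC. \<Psi> i j k * cnj (\<Psi> i' j' k)))\<^sup>2)"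
  have PAe: "(\<Sum>i<mA. (\<mu>A i)\<^sup>2) = PA"
    unfolding pA' PA_def Psi_split \<Psi>_def idx3_def by (simp add: add.assoc)
  have PABe: "(\<Sum>i<mC. (\<mu>C i)\<^sup>2) = PAB"
  proof -
    have e: "\<And>i j k. (i * nB + j) * nC + k = idx3 nB nC i j k" unfolding idx3_def by (simp add: algebra_simps)
    show ?thesis unfolding pC' PAB_def sum_split[OF pB] \<Psi>_def e ..
  qed
  have PACe: "(\<Sum>i<mB. (\<mu>B i)\<^sup>2) = PAC"
  proof -
    have e: "MAC nB nC \<psi> (i * nC + k) b = \<Psi> i b k" if "k < nC" for i k b
      unfolding MAC_def[OF psi] \<Psi>_def using that by simp
    show ?thesis unfolding pB' PAC_def sum_split[OF pC]
      by (intro sum.cong refl) (simp add: e)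
  qed
  have T: "PAC + PAB \<le> 1 + PA" unfolding PA_def PAC_def PAB_def by (rule T_ineq[OF N1])
  have red: "reduced_A nA nB nC (proj \<psi>) = gram nA (nB * nC) (\<lambda>a b. \<psi> $ (a * (nB * nC) + b))"
  proof (rule eq_matI)
    fix i i' assume "i < dim_row (gram nA (nB * nC) (\<lambda>a b. \<psi> $ (a * (nB * nC) + b)))"
      "i' < dim_col (gram nA (nB * nC) (\<lambda>a b. \<psi> $ (a * (nB * nC) + b)))"
    hence i: "i < nA" and i': "i' < nA" by (auto simp: gram_def)
    have "reduced_A nA nB nC (proj \<psi>) $$ (i,i') = (\<Sum>j<nB. \<Sum>k<nC. \<Psi> i j k * cnj (\<Psi> i' j k))"
      unfolding reduced_A_def \<Psi>_def using i i'
      by (simp add: proj_entry[OF psi] idx3_bound)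
    also have "\<dots> = gram nA (nB * nC) (\<lambda>a b. \<psi> $ (a * (nB * nC) + b)) $$ (i,i')"
      unfolding gram_def Psi_split \<Psi>_def idx3_def using i i' by (simp add: add.assoc)
    finally show "reduced_A nA nB nC (proj \<psi>) $$ (i,i') = gram nA (nB * nC) (\<lambda>a b. \<psi> $ (a * (nB * nC) + b)) $$ (i,i')" .
  qed (auto simp: reduced_A_def gram_def)
  have mAd: "mA \<le> dA" unfolding dAdef red by (rule rank_ge_spec[OF decA muA' onA])
  have UA: "((\<Sum>i<mA. sqrt (\<mu>A i))\<^sup>2 - 1) / 2 \<le> sqrt (real mA * (real mA - 1) * (1 - PA)) / 2"
    using neg_upper[OF muA' sA] unfolding PAe .
  have LB: "sqrt ((1 - PAC) / 2) \<le> ((\<Sum>i<mB. sqrt (\<mu>B i))\<^sup>2 - 1) / 2"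
    using neg_lower[OF muB' sB] unfolding PACe .
  have LC: "sqrt ((1 - PAB) / 2) \<le> ((\<Sum>i<mC. sqrt (\<mu>C i))\<^sup>2 - 1) / 2"
    using neg_lower[OF muC' sC] unfolding PABe .
  have PA1: "PA \<le> 1" using pur_le1[of mA \<mu>A] muA' sA unfolding PAe by (auto intro: less_imp_le)
  have PB1: "PAC \<le> 1" using pur_le1[of mB \<mu>B] muB' sB unfolding PACe by (auto intro: less_imp_le)
  have PC1: "PAB \<le> 1" using pur_le1[of mC \<mu>C] muC' sC unfolding PABe by (auto intro: less_imp_le)
  show ?thesis unfolding NA NB NC
    by (rule final_real[OF d2 mAd UA LB LC PA1 PB1 PC1 T])
qed


end
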